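(* Let $\rho_{ABE}=\sum_ap_A(a)|a\rangle\langle a|\otimes\rho^{|a}_{BE}$ be a state with $A$ and $B$ classical, and let $\rho_E=\mathrm{tr}_{AB}[\rho_{ABE}]=\sum_ap_A(a)\rho^{|a}_E$ with $\rho^{|a}_E=\mathrm{tr}_B[\rho^{|a}_{BE}]$. Then for all $a$ with $p_A(a)>0$ and all $\alpha\in[1,\infty]$, $$2^{(\alpha-1)D_\alpha(\rho^{|a}_{BE}\|I_B\otimes\rho_E)}\le p_A(a)^{1-\alpha}.$$
   Context: $\log$ base 2. For $\alpha\in(1,\infty)$, $D_\alpha(\rho\|\sigma)=\frac{1}{\alpha-1}\log\big(\mathrm{tr}[(\sigma^{\frac{1-\alpha}{2\alpha}}\rho\sigma^{\frac{1-\alpha}{2\alpha}})^\alpha]/\mathrm{tr}\rho\big)$ if $\mathrm{supp}\rho\subseteq\mathrm{supp}\sigma$, else $+\infty$; $D_1$ is the Umegaki relative entropy $\mathrm{tr}[\rho(\log\rho-\log\sigma)]$ and $D_\infty(\rho\|\sigma)=\inf\{\lambda:\rho\le2^\lambda\sigma\}$ is the max-divergence. *)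

theory Defs
  imports "Jordan_Normal_Form.Schur_Decomposition" "HOL-Library.Extended_Real"
begin

definition mat_trace :: "complex mat \<Rightarrow> complex" where
  "mat_trace A = (\<Sum>i<dim_row A. A $$ (i,i))"

definition hermitian_mat :: "nat \<Rightarrow> complex mat \<Rightarrow> bool" where
  "hermitian_mat n A \<longleftrightarrow> A \<in> carrier_mat n n \<and> mat_adjoint A = A"

definition unitary_mat :: "nat \<Rightarrow> complex mat \<Rightarrow> bool" where
  "unitary_mat n U \<longleftrightarrow> U \<in> carrier_mat n n \<and> mat_adjoint U * U = 1\<^sub>m n"

definition psd_mat :: "nat \<Rightarrow> complex mat \<Rightarrow> bool" where
  "psd_mat n A \<longleftrightarrow> hermitian_mat n A \<and>
     (\<forall>v \<in> carrier_vec n. Re (\<Sum>i<n. cnj (v $ i) * (A *\<^sub>v v) $ i) \<ge> 0)"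

definition density_mat :: "nat \<Rightarrow> complex mat \<Rightarrow> bool" where
  "density_mat n A \<longleftrightarrow> psd_mat n A \<and> mat_trace A = 1"

definition loewner_le :: "nat \<Rightarrow> complex mat \<Rightarrow> complex mat \<Rightarrow> bool" where
  "loewner_le n A B \<longleftrightarrow> A \<in> carrier_mat n n \<and> B \<in> carrier_mat n n \<and> psd_mat n (B - A)"

definition real_diag :: "nat \<Rightarrow> (nat \<Rightarrow> real) \<Rightarrow> complex mat" where
  "real_diag n d = mat n n (\<lambda>(i,j). if i = j then complex_of_real (d i) else 0)"

definition mat_fun :: "nat \<Rightarrow> (real \<Rightarrow> real) \<Rightarrow> complex mat \<Rightarrow> complex mat" where
  "mat_fun n f A = (SOME M. \<exists>U d. unitary_mat n U \<and> A = U * real_diag n d * mat_adjoint U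
      \<and> M = U * real_diag n (f \<circ> d) * mat_adjoint U)"

definition mat_range :: "nat \<Rightarrow> complex mat \<Rightarrow> complex vec set" where
  "mat_range n A = {A *\<^sub>v v | v. v \<in> carrier_vec n}"

text \<open>Sandwiched Renyi divergence, alpha > 1 (negative powers taken on the
  support; note 0 powr t = 0).\<close>
definition sandwiched_D :: "nat \<Rightarrow> real \<Rightarrow> complex mat \<Rightarrow> complex mat \<Rightarrow> ereal" where
  "sandwiched_D n \<alpha> \<rho> \<sigma> =
     (if mat_range n \<rho> \<subseteq> mat_range n \<sigma> then
        (let S = mat_fun n (\<lambda>x. x powr ((1 - \<alpha>) / (2 * \<alpha>))) \<sigma> in
         ereal (1 / (\<alpha> - 1) * log 2
            (Re (mat_trace (mat_fun n (\<lambda>x. x powr \<alpha>) (S * \<rho> * S))) / Re (mat_trace \<rho>))))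
      else \<infinity>)"

text \<open>Umegaki relative entropy (log base 2; log 2 0 = 0 in Isabelle, i.e. logs on supports)\<close>
definition umegaki_D :: "nat \<Rightarrow> complex mat \<Rightarrow> complex mat \<Rightarrow> ereal" where
  "umegaki_D n \<rho> \<sigma> =
     (if mat_range n \<rho> \<subseteq> mat_range n \<sigma> then
        ereal (Re (mat_trace (\<rho> * (mat_fun n (log 2) \<rho> - mat_fun n (log 2) \<sigma>))))
      else \<infinity>)"

definition renyi_D :: "nat \<Rightarrow> real \<Rightarrow> complex mat \<Rightarrow> complex mat \<Rightarrow> ereal" where
  "renyi_D n \<alpha> \<rho> \<sigma> = (if \<alpha> = 1 then umegaki_D n \<rho> \<sigma> else sandwiched_D n \<alpha> \<rho> \<sigma>)"

text \<open>max-divergence: inf {\<lambda>. \<rho> \<le> 2^\<lambda> \<sigma>} (inf of empty set = +\<infinity>)\<close>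
definition max_D :: "nat \<Rightarrow> complex mat \<Rightarrow> complex mat \<Rightarrow> ereal" where
  "max_D n \<rho> \<sigma> = Inf {ereal t | t. loewner_le n \<rho> (complex_of_real (2 powr t) \<cdot>\<^sub>m \<sigma>)}"

text \<open>Kronecker product, standard ordering (index of first factor is the major one)\<close>
definition kron :: "complex mat \<Rightarrow> complex mat \<Rightarrow> complex mat" where
  "kron A B = mat (dim_row A * dim_row B) (dim_col A * dim_col B)
     (\<lambda>(i,j). A $$ (i div dim_row B, j div dim_col B) * B $$ (i mod dim_row B, j mod dim_col B))"

text \<open>sum_b |b><b| \<otimes> \<omega>_b on B \<otimes> E (dim B = nB, dim E = nE)\<close>
definition cq_mat :: "nat \<Rightarrow> nat \<Rightarrow> (nat \<Rightarrow> complex mat) \<Rightarrow> complex mat" where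
  "cq_mat nB nE \<omega> = mat (nB * nE) (nB * nE)
     (\<lambda>(i,j). if i div nE = j div nE then \<omega> (i div nE) $$ (i mod nE, j mod nE) else 0)"

definition ptrace_B :: "nat \<Rightarrow> nat \<Rightarrow> complex mat \<Rightarrow> complex mat" where
  "ptrace_B nB nE M = mat nE nE (\<lambda>(i,j). \<Sum>b<nB. M $$ (b * nE + i, b * nE + j))"

end

theory Submission
  imports Defs
begin

lemma mult_entry: "A \<in> carrier_mat n k \<Longrightarrow> B \<in> carrier_mat k m \<Longrightarrow> i < n \<Longrightarrow> j < m \<Longrightarrow> (A*B) $$ (i,j) = (\<Sum>l<k. A$$(i,l) * B$$(l,j))"
  by (auto simp: index_mult_mat scalar_prod_def atLeast0LessThan intro!: sum.cong)

lemma adj_dim[simp]: "dim_row (mat_adjoint A) = dim_col A" "dim_col (mat_adjoint A) = dim_row A"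
  by (auto simp: mat_adjoint_def)

lemma adj_entry[simp]: "i < dim_col A \<Longrightarrow> j < dim_row A \<Longrightarrow> mat_adjoint A $$ (i,j) = cnj (A $$ (j,i))"
  by (auto simp: mat_adjoint_def mat_of_rows_def)

lemma adj_carrier[simp]: "A \<in> carrier_mat n m \<Longrightarrow> mat_adjoint A \<in> carrier_mat m n"
  by (metis adj_dim carrier_matD carrier_matI)

lemma adj_adj[simp]: "mat_adjoint (mat_adjoint A) = (A :: complex mat)"
  by (rule eq_matI) auto

lemma adj_mult: fixes A B :: "complex mat" assumes "A \<in> carrier_mat n k" "B \<in> carrier_mat k m"
  shows "mat_adjoint (A*B) = mat_adjoint B * mat_adjoint A"
proof (rule eq_matI)
  fix i j assume ij: "i < dim_row (mat_adjoint B * mat_adjoint A)" "j < dim_col (mat_adjoint B * mat_adjoint A)"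
  hence i: "i < m" and j: "j < n" using assms by auto
  have "mat_adjoint (A*B) $$ (i,j) = cnj ((A*B) $$ (j,i))" using assms i j by auto
  also have "\<dots> = cnj (\<Sum>l<k. A$$(j,l) * B$$(l,i))" using mult_entry[OF assms j i] by simp
  also have "\<dots> = (\<Sum>l<k. cnj (A$$(j,l)) * cnj (B$$(l,i)))" by simp
  also have "\<dots> = (mat_adjoint B * mat_adjoint A) $$ (i,j)"
    using assms i j by (subst mult_entry[of _ m k _ n]) (auto intro!: sum.cong)
  finally show "mat_adjoint (A*B) $$ (i,j) = (mat_adjoint B * mat_adjoint A) $$ (i,j)" .
qed (use assms in auto)

lemma sq_mult: "A \<in> carrier_mat n n \<Longrightarrow> B \<in> carrier_mat n n \<Longrightarrow> A * B \<in> carrier_mat n n"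
  by auto

lemma sq_adj: "A \<in> carrier_mat n n \<Longrightarrow> mat_adjoint A \<in> carrier_mat n n"
  by auto

lemma unitary_right: "unitary_mat n U \<Longrightarrow> U * mat_adjoint U = 1\<^sub>m n"
  unfolding unitary_mat_def using mat_mult_left_right_inverse[of "mat_adjoint U" n U] by auto

lemma real_diag_carrier[simp]: "real_diag n d \<in> carrier_mat n n"
  by (simp add: real_diag_def)

lemma diag_entry: assumes "U \<in> carrier_mat n n" "i<n" "j<n"
  shows "(U * real_diag n d * mat_adjoint U) $$ (i,j) = (\<Sum>k<n. U$$(i,k) * complex_of_real (d k) * cnj (U$$(j,k)))"
proof -
  have 1: "(U * real_diag n d) $$ (i,k) = U$$(i,k) * complex_of_real (d k)" if "k<n" for k
  proof -
    have "(U * real_diag n d) $$ (i,k) = (\<Sum>l<n. U$$(i,l) * real_diag n d $$ (l,k))"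
      using assms that by (simp add: mult_entry[of _ n n _ n])
    also have "\<dots> = (\<Sum>l<n. if l = k then U$$(i,l) * complex_of_real (d k) else 0)"
      using that by (intro sum.cong) (auto simp: real_diag_def)
    finally show ?thesis using that by simp
  qed
  show ?thesis using assms 1 by (subst mult_entry[of _ n n _ n]) auto
qed

lemma cnorm_sprod: "w \<bullet>c (w :: complex vec) = complex_of_real (\<Sum>i<dim_vec w. (cmod (w$i))^2)"
proof -
  have "w \<bullet>c w = (\<Sum>i<dim_vec w. w$i * cnj (w$i))" by (simp add: scalar_prod_def atLeast0LessThan)
  also have "\<dots> = (\<Sum>i<dim_vec w. complex_of_real ((cmod (w$i))^2))"
    by (intro sum.cong refl) (simp only: complex_norm_square)
  finally show ?thesis by simp
qed

lemma herm_decomp: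
  assumes "A \<in> carrier_mat n n" "mat_adjoint A = A"
  shows "\<exists>U d. unitary_mat n U \<and> A = U * real_diag n d * mat_adjoint U"
using assms proof (induction n arbitrary: A)
  case 0
  have "A = 1\<^sub>m 0 * real_diag 0 (\<lambda>_. 0) * mat_adjoint (1\<^sub>m 0)" using 0 by (intro eq_matI) auto
  moreover have "unitary_mat 0 (1\<^sub>m 0)" by (auto simp: unitary_mat_def intro!: eq_matI)
  ultimately show ?case by blast
next
  case (Suc m)
  define n where "n = Suc m"
  have A: "A \<in> carrier_mat n n" using Suc n_def by auto
  have hA: "mat_adjoint A = A" using Suc by auto
  have "degree (char_poly A) = n" using degree_monic_char_poly[OF A] by auto
  hence "\<not> constant (poly (char_poly A))" unfolding constant_degree n_def by simp
  then obtain e where "poly (char_poly A) e = 0" using fundamental_theorem_of_algebra by blast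
  hence ev: "eigenvalue A e" using eigenvalue_root_char_poly[OF A] by auto
  define v where "v = find_eigenvector A e"
  have "eigenvector A v e" using find_eigenvector[OF A ev] v_def by auto
  hence v: "v \<in> carrier_vec n" "v \<noteq> 0\<^sub>v n" "A *\<^sub>v v = e \<cdot>\<^sub>v v" using A unfolding eigenvector_def by auto
  interpret cof_vec_space n "TYPE(complex)" .
  define b where "b = basis_completion v"
  from basis_completion[OF v(1) v(2), folded b_def]
  have dist_b: "distinct b" 
    and indep: "\<not> lin_dep (set b)" and b: "set b \<subseteq> carrier_vec n" and hdb: "hd b = v" 
    and len_b: "length b = n" by auto
  from hdb len_b obtain vs where bv: "b = v # vs" by (cases b, auto simp: n_def)
  define ws where "ws = gram_schmidt n b"
  from gram_schmidt_result[OF b dist_b indep ws_def]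
  have ws: "set ws \<subseteq> carrier_vec n" "corthogonal ws" "length ws = n" by (auto simp: len_b)
  have hdws: "ws ! 0 = v"
  proof -
    have "ws \<noteq> []" using ws(3) n_def by auto
    hence "ws!0 = hd ws" by (simp add: hd_conv_nth)
    also have "hd ws = v" using gram_schmidt_hd[OF v(1), of vs] bv ws_def by simp
    finally show ?thesis .
  qed
  have wsc: "ws ! j \<in> carrier_vec n" if "j < n" for j using ws that by auto
  define nr where "nr j = (\<Sum>i<n. (cmod ((ws!j)$i))^2)" for j
  have nr: "ws!j \<bullet>c ws!j = complex_of_real (nr j)" if "j<n" for j
    using cnorm_sprod[of "ws!j"] wsc[OF that] nr_def by auto
  have nrpos: "nr j > 0" if "j < n" for j
  proof -
    have "ws!j \<bullet>c ws!j \<noteq> 0" using corthogonalD[OF ws(2), of j j] that ws(3) by auto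
    moreover have "nr j \<ge> 0" unfolding nr_def by (auto intro: sum_nonneg)
    ultimately show ?thesis using nr[OF that] by force
  qed
  define c where "c j = complex_of_real (1 / sqrt (nr j))" for j
  define W where "W = mat n n (\<lambda>(i,j). c j * (ws!j) $ i)"
  have W: "W \<in> carrier_mat n n" unfolding W_def by auto
  have WW: "mat_adjoint W * W = 1\<^sub>m n"
  proof (rule eq_matI)
    fix i j assume "i < dim_row (1\<^sub>m n)" "j < dim_col (1\<^sub>m n)"
    hence i: "i < n" and j: "j < n" by auto
    have "(mat_adjoint W * W) $$ (i,j) = (\<Sum>k<n. cnj (c i * (ws!i)$k) * (c j * (ws!j)$k))"
      using i j W by (subst mult_entry[of _ n n _ n]) (auto simp: W_def)
    also have "\<dots> = cnj (c i) * c j * (ws!j \<bullet>c ws!i)"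
      using wsc[OF i] wsc[OF j]
      by (simp add: scalar_prod_def atLeast0LessThan sum_distrib_left mult_ac)
    also have "\<dots> = 1\<^sub>m n $$ (i,j)"
    proof (cases "i = j")
      case True
      have "sqrt (nr i) * sqrt (nr i) = nr i" using nrpos[OF i] by simp
      then show ?thesis using True nr[OF i] i nrpos[OF i] unfolding c_def
        by (simp flip: of_real_mult)
    next
      case False
      then show ?thesis using corthogonalD[OF ws(2), of j i] i j ws(3) by auto
    qed
    finally show "(mat_adjoint W * W) $$ (i,j) = 1\<^sub>m n $$ (i,j)" .
  qed (use W in auto)
  have WW': "W * mat_adjoint W = 1\<^sub>m n"
    using mat_mult_left_right_inverse[of "mat_adjoint W" n W] WW W by auto
  have colW: "col W 0 = c 0 \<cdot>\<^sub>v v"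
    using v(1) hdws by (intro eq_vecI) (auto simp: W_def n_def)
  define A' where "A' = mat_adjoint W * A * W"
  have A': "A' \<in> carrier_mat n n" unfolding A'_def using A W by auto
  have hA': "mat_adjoint A' = A'"
    unfolding A'_def using A W hA
    by (simp add: adj_mult[of _ n n _ n] assoc_mult_mat[of _ n n _ n _ n])
  have col0: "A' $$ (i, 0) = (if i = 0 then e else 0)" if i: "i < n" for i
  proof -
    have "col A' 0 = mat_adjoint W *\<^sub>v (A *\<^sub>v col W 0)"
      unfolding A'_def using A W n_def col_mult2[of "mat_adjoint W" n n "A*W" n 0] col_mult2[of A n n W n 0]
      by (simp add: assoc_mult_mat[of _ n n _ n _ n])
    also have "A *\<^sub>v col W 0 = e \<cdot>\<^sub>v col W 0"
      unfolding colW using v A by (simp add: mult_mat_vec[of _ n n] smult_smult_assoc mult.commute)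
    also have "mat_adjoint W *\<^sub>v (e \<cdot>\<^sub>v col W 0) = e \<cdot>\<^sub>v (col (mat_adjoint W * W) 0)"
      using W n_def mult_mat_vec[of "mat_adjoint W" n n "col W 0" e] carrier_vecI[of "col W 0" n] col_mult2[of "mat_adjoint W" n n W n 0] by simp
    finally have "col A' 0 = e \<cdot>\<^sub>v col (1\<^sub>m n) 0" using WW by simp
    hence "col A' 0 $ i = (e \<cdot>\<^sub>v col (1\<^sub>m n) 0) $ i" by simp
    thus ?thesis using i A' n_def by auto
  qed
  have row0: "A' $$ (0, j) = (if j = 0 then e else 0)" if j: "j < n" for j
  proof -
    have "A' $$ (0,j) = mat_adjoint A' $$ (0,j)" using hA' by simp
    also have "\<dots> = cnj (A' $$ (j,0))" using A' j n_def by auto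
    finally show ?thesis using col0[OF j] col0[of 0] n_def
      by (cases "j = 0") auto
  qed
  have ereal: "cnj e = e"
  proof -
    have "e = A' $$ (0,0)" using col0[of 0] n_def by simp
    also have "\<dots> = mat_adjoint A' $$ (0,0)" using hA' by simp
    also have "\<dots> = cnj (A' $$ (0,0))" using A' n_def by simp
    finally show ?thesis using col0[of 0] n_def by simp
  qed
  define A3 where "A3 = mat m m (\<lambda>(i,j). A' $$ (Suc i, Suc j))"
  have A3: "A3 \<in> carrier_mat m m" unfolding A3_def by auto
  have hA3: "mat_adjoint A3 = A3"
  proof (rule eq_matI)
    fix i j assume "i < dim_row A3" "j < dim_col A3"
    hence i: "i < m" and j: "j < m" using A3 by auto
    have "mat_adjoint A3 $$ (i,j) = cnj (A' $$ (Suc j, Suc i))" using i j by (simp add: A3_def)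
    also have "\<dots> = mat_adjoint A' $$ (Suc i, Suc j)" using A' i j n_def by auto
    finally show "mat_adjoint A3 $$ (i,j) = A3 $$ (i,j)" using hA' i j by (simp add: A3_def)
  qed (use A3 in auto)
  obtain U3 d3 where U3: "unitary_mat m U3" and A3d: "A3 = U3 * real_diag m d3 * mat_adjoint U3"
    using Suc.IH[OF A3 hA3] by blast
  have U3c: "U3 \<in> carrier_mat m m" using U3 unfolding unitary_mat_def by auto
  have U3o: "(\<Sum>k<m. cnj (U3$$(k,i)) * U3$$(k,j)) = (if i = j then 1 else 0)" if "i<m" "j<m" for i j
  proof -
    have "(mat_adjoint U3 * U3) $$ (i,j) = (\<Sum>k<m. cnj (U3$$(k,i)) * U3$$(k,j))"
      using that U3c by (subst mult_entry[of _ m m _ m]) auto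
    thus ?thesis using U3 that unfolding unitary_mat_def by auto
  qed
  have A3e: "A' $$ (Suc i, Suc j) = (\<Sum>k<m. U3$$(i,k) * complex_of_real (d3 k) * cnj (U3$$(j,k)))"
    if "i<m" "j<m" for i j
    using diag_entry[OF U3c that, of d3] A3d[symmetric] that by (simp add: A3_def)
  define U1 where "U1 = mat n n (\<lambda>(i,j). if i = 0 \<and> j = 0 then 1 else if i = 0 \<or> j = 0 then 0 else U3 $$ (i - 1, j - 1))"
  have U1c: "U1 \<in> carrier_mat n n" unfolding U1_def by auto
  define dd where "dd i = (if i = 0 then Re e else d3 (i - 1))" for i
  have U1u: "mat_adjoint U1 * U1 = 1\<^sub>m n"
  proof (rule eq_matI)
    fix i j assume "i < dim_row (1\<^sub>m n)" "j < dim_col (1\<^sub>m n)"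
    hence i: "i < n" and j: "j < n" by auto
    have "(mat_adjoint U1 * U1) $$ (i,j) = (\<Sum>k<Suc m. cnj (U1$$(k,i)) * U1$$(k,j))"
      using i j U1c n_def by (subst mult_entry[of _ n n _ n]) auto
    also have "\<dots> = cnj (U1$$(0,i)) * U1$$(0,j) + (\<Sum>k<m. cnj (U1$$(Suc k,i)) * U1$$(Suc k,j))"
      by (simp only: sum.lessThan_Suc_shift)
    also have "\<dots> = 1\<^sub>m n $$ (i,j)"
    proof (cases i)
      case 0 then show ?thesis using i j n_def by (cases j) (auto simp: U1_def)
    next
      case (Suc i') note si = this
      show ?thesis
      proof (cases j)
        case 0 then show ?thesis using i j n_def si by (auto simp: U1_def)
      next
        case (Suc j')
        have "(\<Sum>k<m. cnj (U1$$(Suc k,i)) * U1$$(Suc k,j)) = (\<Sum>k<m. cnj (U3$$(k,i')) * U3$$(k,j'))"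
          using i j n_def si Suc by (intro sum.cong) (auto simp: U1_def)
        then show ?thesis using U3o[of i' j'] i j n_def si Suc by (auto simp: U1_def)
      qed
    qed
    finally show "(mat_adjoint U1 * U1) $$ (i,j) = 1\<^sub>m n $$ (i,j)" .
  qed (use U1c in auto)
  have U1_00: "U1$$(0,0) = 1" by (simp add: U1_def n_def)
  have U1_0S: "U1$$(0,Suc k) = 0" if "k<m" for k using that by (simp add: U1_def n_def)
  have U1_S0: "U1$$(Suc k,0) = 0" if "k<m" for k using that by (simp add: U1_def n_def)
  have U1_SS: "U1$$(Suc i,Suc k) = U3$$(i,k)" if "i<m" "k<m" for i k using that by (simp add: U1_def n_def)
  have eRe: "complex_of_real (Re e) = e"
  proof -
    have "Im e = 0" using arg_cong[OF ereal, of Im] by simp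
    thus ?thesis by (simp add: complex_eq_iff)
  qed
  have A'd: "A' = U1 * real_diag n dd * mat_adjoint U1"
  proof (rule eq_matI)
    fix i j assume "i < dim_row (U1 * real_diag n dd * mat_adjoint U1)" "j < dim_col (U1 * real_diag n dd * mat_adjoint U1)"
    hence i: "i < n" and j: "j < n" using U1c by auto
    have "(U1 * real_diag n dd * mat_adjoint U1) $$ (i,j) = (\<Sum>k<Suc m. U1$$(i,k) * complex_of_real (dd k) * cnj (U1$$(j,k)))"
      using diag_entry[OF U1c i j] n_def by simp
    also have "\<dots> = U1$$(i,0) * complex_of_real (dd 0) * cnj (U1$$(j,0)) + (\<Sum>k<m. U1$$(i,Suc k) * complex_of_real (dd (Suc k)) * cnj (U1$$(j,Suc k)))"
      by (simp only: sum.lessThan_Suc_shift)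
    also have "\<dots> = A' $$ (i,j)"
    proof (cases i)
      case 0 note i0 = this
      have s0: "(\<Sum>k<m. U1$$(i,Suc k) * complex_of_real (dd (Suc k)) * cnj (U1$$(j,Suc k))) = 0"
        by (rule sum.neutral) (simp add: i0 U1_0S)
      show ?thesis
      proof (cases j)
        case 0 then show ?thesis using i0 s0 U1_00 col0[of 0] n_def eRe by (simp add: dd_def)
      next
        case (Suc j') then show ?thesis using i0 s0 U1_00 j n_def row0[OF j] U1_S0[of j'] by simp
      qed
    next
      case (Suc i') note si = this
      show ?thesis
      proof (cases j)
        case 0 
        have s0: "(\<Sum>k<m. U1$$(i,Suc k) * complex_of_real (dd (Suc k)) * cnj (U1$$(j,Suc k))) = 0"
          by (rule sum.neutral) (simp add: 0 U1_0S)
        then show ?thesis using 0 i n_def si col0[OF i] U1_S0[of i'] by simp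
      next
        case (Suc j')
        have "(\<Sum>k<m. U1$$(i,Suc k) * complex_of_real (dd (Suc k)) * cnj (U1$$(j,Suc k))) = (\<Sum>k<m. U3$$(i',k) * complex_of_real (d3 k) * cnj (U3$$(j',k)))"
          using i j n_def si Suc by (intro sum.cong refl) (simp add: U1_SS dd_def)
        then show ?thesis using A3e[of i' j'] i j n_def si Suc U1_S0 by simp
      qed
    qed
    finally show "A' $$ (i,j) = (U1 * real_diag n dd * mat_adjoint U1) $$ (i,j)" by simp
  qed (use A' U1c in auto)
  define U where "U = W * U1"
  have Uc: "U \<in> carrier_mat n n" unfolding U_def using W U1c by auto
  have "mat_adjoint U * U = (mat_adjoint U1 * mat_adjoint W) * (W * U1)"
    unfolding U_def using W U1c by (simp add: adj_mult[of W n n U1 n])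
  also have "\<dots> = mat_adjoint U1 * ((mat_adjoint W * W) * U1)"
    using W U1c by (simp add: assoc_mult_mat[of _ n n _ n _ n])
  also have "\<dots> = 1\<^sub>m n" using WW U1u U1c by simp
  finally have Uu: "unitary_mat n U" using Uc unfolding unitary_mat_def by auto
  have "A = (W * mat_adjoint W) * A * (W * mat_adjoint W)" using WW' A by simp
  also have "\<dots> = W * A' * mat_adjoint W" unfolding A'_def using W A
    by (simp add: sq_mult sq_adj assoc_mult_mat[of _ n n _ n _ n])
  also have "\<dots> = U * real_diag n dd * mat_adjoint U" unfolding A'd U_def using W U1c
    by (simp add: sq_mult sq_adj adj_mult[of _ n n _ n] assoc_mult_mat[of _ n n _ n _ n])
  finally show ?case using Uu n_def by blast
qed

definition ip :: "nat \<Rightarrow> (nat \<Rightarrow> complex) \<Rightarrow> (nat \<Rightarrow> complex) \<Rightarrow> complex" where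
  "ip n x y = (\<Sum>i<n. cnj (x i) * y i)"
definition mv :: "nat \<Rightarrow> complex mat \<Rightarrow> (nat \<Rightarrow> complex) \<Rightarrow> nat \<Rightarrow> complex" where
  "mv n A x = (\<lambda>i. \<Sum>j<n. A$$(i,j) * x j)"
definition cv :: "complex mat \<Rightarrow> nat \<Rightarrow> nat \<Rightarrow> complex" where
  "cv U k = (\<lambda>i. U$$(i,k))"
definition dec :: "nat \<Rightarrow> complex mat \<Rightarrow> (nat \<Rightarrow> real) \<Rightarrow> complex mat \<Rightarrow> bool" where
  "dec n U d A \<longleftrightarrow> unitary_mat n U \<and> A = U * real_diag n d * mat_adjoint U"

lemma ip_cong: "(\<And>i. i < n \<Longrightarrow> x i = x' i) \<Longrightarrow> (\<And>i. i < n \<Longrightarrow> y i = y' i) \<Longrightarrow> ip n x y = ip n x' y'"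
  unfolding ip_def by (intro sum.cong) auto

lemma ip_cnj: "cnj (ip n x y) = ip n y x"
  unfolding ip_def by (simp add: mult.commute)

lemma ip_scale_right: "ip n x (\<lambda>i. a * y i) = a * ip n x y"
  unfolding ip_def by (simp add: sum_distrib_left mult_ac)

lemma ip_scale_left: "ip n (\<lambda>i. a * x i) y = cnj a * ip n x y"
  unfolding ip_def by (simp add: sum_distrib_left mult_ac)

lemma ip_sum_right: "ip n x (\<lambda>i. \<Sum>l\<in>L. f l i) = (\<Sum>l\<in>L. ip n x (f l))"
  unfolding ip_def sum_distrib_left by (rule sum.swap)

lemma ip_self_real: "ip n x x = complex_of_real (\<Sum>i<n. (cmod (x i))^2)"
proof -
  have "ip n x x = (\<Sum>i<n. complex_of_real ((cmod (x i))^2))"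
    unfolding ip_def by (intro sum.cong refl) (simp only: complex_norm_square mult.commute)
  thus ?thesis by simp
qed

lemma unitary_carrier: "unitary_mat n U \<Longrightarrow> U \<in> carrier_mat n n"
  unfolding unitary_mat_def by auto

lemma unitary_col: assumes "unitary_mat n U" "i < n" "j < n"
  shows "ip n (cv U i) (cv U j) = (if i = j then 1 else 0)"
proof -
  have U: "U \<in> carrier_mat n n" using assms unitary_carrier by auto
  have "(mat_adjoint U * U) $$ (i,j) = (\<Sum>k<n. cnj (U$$(k,i)) * U$$(k,j))"
    using assms U by (subst mult_entry[of _ n n _ n]) auto
  thus ?thesis using assms unfolding unitary_mat_def ip_def cv_def by auto
qed

lemma unitary_row: assumes "unitary_mat n U" "i < n" "j < n"
  shows "(\<Sum>k<n. U$$(i,k) * cnj (U$$(j,k))) = (if i = j then 1 else 0)"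
proof -
  have U: "U \<in> carrier_mat n n" using assms unitary_carrier by auto
  have "(U * mat_adjoint U) $$ (i,j) = (\<Sum>k<n. U$$(i,k) * cnj (U$$(j,k)))"
    using assms U by (subst mult_entry[of _ n n _ n]) auto
  thus ?thesis using assms unitary_right[OF assms(1)] by auto
qed

lemma unitary_expand: assumes "unitary_mat n U" "i < n"
  shows "(\<Sum>k<n. U$$(i,k) * ip n (cv U k) x) = x i"
proof -
  have "(\<Sum>k<n. U$$(i,k) * ip n (cv U k) x) = (\<Sum>k<n. \<Sum>l<n. U$$(i,k) * cnj (U$$(l,k)) * x l)"
    unfolding ip_def cv_def by (simp add: sum_distrib_left mult_ac)
  also have "\<dots> = (\<Sum>l<n. (\<Sum>k<n. U$$(i,k) * cnj (U$$(l,k))) * x l)"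
    by (subst sum.swap) (simp add: sum_distrib_right)
  also have "\<dots> = (\<Sum>l<n. if l = i then x l else 0)"
    using unitary_row[OF assms(1) assms(2)] by (intro sum.cong) auto
  finally show ?thesis using assms(2) by simp
qed

lemma unitary_parseval: assumes "unitary_mat n U"
  shows "ip n x y = (\<Sum>k<n. cnj (ip n (cv U k) x) * ip n (cv U k) y)"
proof -
  have "(\<Sum>k<n. cnj (ip n (cv U k) x) * ip n (cv U k) y) = (\<Sum>k<n. ip n x (cv U k) * ip n (cv U k) y)"
    by (simp add: ip_cnj)
  also have "\<dots> = (\<Sum>k<n. \<Sum>i<n. cnj (x i) * (U$$(i,k) * ip n (cv U k) y))"
    unfolding ip_def[of n x] cv_def by (simp add: sum_distrib_left sum_distrib_right mult_ac)
  also have "\<dots> = (\<Sum>i<n. cnj (x i) * (\<Sum>k<n. U$$(i,k) * ip n (cv U k) y))"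
    by (subst sum.swap) (simp add: sum_distrib_left)
  also have "\<dots> = ip n x y"
    unfolding ip_def[of n x y] using unitary_expand[OF assms] by (intro sum.cong) auto
  finally show ?thesis by simp
qed

lemma dec_carrier: "dec n U d A \<Longrightarrow> A \<in> carrier_mat n n"
  unfolding dec_def using unitary_carrier by fastforce

lemma dec_entry: assumes "dec n U d A" "i < n" "j < n"
  shows "A$$(i,j) = (\<Sum>k<n. U$$(i,k) * complex_of_real (d k) * cnj (U$$(j,k)))"
  using assms diag_entry[of U n i j d] unitary_carrier unfolding dec_def by auto

lemma dec_mv: assumes "dec n U d A" "i < n"
  shows "mv n A x i = (\<Sum>k<n. U$$(i,k) * complex_of_real (d k) * ip n (cv U k) x)"
proof -
  have "mv n A x i = (\<Sum>j<n. \<Sum>k<n. U$$(i,k) * complex_of_real (d k) * cnj (U$$(j,k)) * x j)"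
    unfolding mv_def using dec_entry[OF assms(1) assms(2)] by (simp add: sum_distrib_right)
  also have "\<dots> = (\<Sum>k<n. U$$(i,k) * complex_of_real (d k) * ip n (cv U k) x)"
    by (subst sum.swap) (simp add: ip_def cv_def sum_distrib_left mult_ac)
  finally show ?thesis .
qed

lemma dec_qf: assumes "dec n U d A"
  shows "ip n y (mv n A x) = (\<Sum>k<n. complex_of_real (d k) * cnj (ip n (cv U k) y) * ip n (cv U k) x)"
proof -
  have "ip n y (mv n A x) = (\<Sum>i<n. cnj (y i) * (\<Sum>k<n. U$$(i,k) * complex_of_real (d k) * ip n (cv U k) x))"
    unfolding ip_def[of n y] using dec_mv[OF assms] by (intro sum.cong) auto
  also have "\<dots> = (\<Sum>i<n. \<Sum>k<n. cnj (y i) * U$$(i,k) * (complex_of_real (d k) * ip n (cv U k) x))"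
    by (simp add: sum_distrib_left mult_ac)
  also have "\<dots> = (\<Sum>k<n. \<Sum>i<n. cnj (y i) * U$$(i,k) * (complex_of_real (d k) * ip n (cv U k) x))"
    by (rule sum.swap)
  also have "\<dots> = (\<Sum>k<n. (\<Sum>i<n. cnj (y i) * U$$(i,k)) * (complex_of_real (d k) * ip n (cv U k) x))"
    by (simp add: sum_distrib_right)
  also have "\<dots> = (\<Sum>k<n. complex_of_real (d k) * cnj (ip n (cv U k) y) * ip n (cv U k) x)"
    by (intro sum.cong refl) (simp add: ip_def cv_def mult_ac)
  finally show ?thesis .
qed

lemma dec_eigen: assumes "dec n U d A" "k < n" "i < n"
  shows "mv n A (cv U k) i = complex_of_real (d k) * U$$(i,k)"
proof -
  have u: "unitary_mat n U" using assms unfolding dec_def by auto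
  have "mv n A (cv U k) i = (\<Sum>l<n. U$$(i,l) * complex_of_real (d l) * ip n (cv U l) (cv U k))"
    using dec_mv[OF assms(1) assms(3)] .
  also have "\<dots> = (\<Sum>l<n. if l = k then U$$(i,k) * complex_of_real (d k) else 0)"
    using unitary_col[OF u _ assms(2)] by (intro sum.cong) auto
  also have "\<dots> = U$$(i,k) * complex_of_real (d k)" using assms(2) by simp
  finally show ?thesis by simp
qed

lemma dec_trace: assumes "dec n U d A"
  shows "mat_trace A = complex_of_real (\<Sum>k<n. d k)"
proof -
  have A: "A \<in> carrier_mat n n" using dec_carrier[OF assms] .
  have "mat_trace A = (\<Sum>i<n. \<Sum>k<n. U$$(i,k) * complex_of_real (d k) * cnj (U$$(i,k)))"
    unfolding mat_trace_def using A dec_entry[OF assms] by (intro sum.cong) auto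
  also have "\<dots> = (\<Sum>k<n. complex_of_real (d k) * ip n (cv U k) (cv U k))"
    by (subst sum.swap) (simp add: ip_def cv_def sum_distrib_left mult_ac)
  also have "\<dots> = (\<Sum>k<n. complex_of_real (d k))"
    using unitary_col[of n U] assms unfolding dec_def by (intro sum.cong) auto
  finally show ?thesis by simp
qed

lemma dec_herm: assumes "dec n U d A" shows "mat_adjoint A = A"
proof -
  have A: "A \<in> carrier_mat n n" using dec_carrier[OF assms] .
  show ?thesis
  proof (rule eq_matI)
    fix i j assume "i < dim_row A" "j < dim_col A"
    hence i: "i < n" and j: "j < n" using A by auto
    have "mat_adjoint A $$ (i,j) = cnj (A $$ (j,i))" using A i j by auto
    also have "\<dots> = A $$ (i,j)" using dec_entry[OF assms i j] dec_entry[OF assms j i]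
      by (simp add: mult_ac)
    finally show "mat_adjoint A $$ (i,j) = A $$ (i,j)" .
  qed (use A in auto)
qed

lemma herm_dec: "A \<in> carrier_mat n n \<Longrightarrow> mat_adjoint A = A \<Longrightarrow> \<exists>U d. dec n U d A"
  unfolding dec_def using herm_decomp by blast

lemma mulvec_mv: "A \<in> carrier_mat n n \<Longrightarrow> v \<in> carrier_vec n \<Longrightarrow> i < n \<Longrightarrow> (A *\<^sub>v v) $ i = mv n A (\<lambda>j. v$j) i"
  by (auto simp: mv_def scalar_prod_def atLeast0LessThan intro!: sum.cong)

lemma psd_iff: assumes "A \<in> carrier_mat n n"
  shows "psd_mat n A \<longleftrightarrow> hermitian_mat n A \<and> (\<forall>x. 0 \<le> Re (ip n x (mv n A x)))"
proof -
  have eq: "(\<Sum>i<n. cnj (v $ i) * (A *\<^sub>v v) $ i) = ip n (\<lambda>j. v$j) (mv n A (\<lambda>j. v$j))" if "v \<in> carrier_vec n" for v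
    unfolding ip_def using mulvec_mv[OF assms that] by (intro sum.cong) auto
  have "(\<forall>v \<in> carrier_vec n. Re (\<Sum>i<n. cnj (v $ i) * (A *\<^sub>v v) $ i) \<ge> 0) \<longleftrightarrow> (\<forall>x. 0 \<le> Re (ip n x (mv n A x)))"
  proof
    assume h: "\<forall>v \<in> carrier_vec n. Re (\<Sum>i<n. cnj (v $ i) * (A *\<^sub>v v) $ i) \<ge> 0"
    show "\<forall>x. 0 \<le> Re (ip n x (mv n A x))"
    proof
      fix x :: "nat \<Rightarrow> complex"
      have v: "vec n x \<in> carrier_vec n" by simp
      have "ip n x (mv n A x) = ip n (\<lambda>j. vec n x $ j) (mv n A (\<lambda>j. vec n x $ j))"
        by (intro ip_cong) (auto simp: mv_def intro!: sum.cong)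
      thus "0 \<le> Re (ip n x (mv n A x))" using h eq[OF v] v by metis
    qed
  next
    assume h: "\<forall>x. 0 \<le> Re (ip n x (mv n A x))"
    show "\<forall>v \<in> carrier_vec n. Re (\<Sum>i<n. cnj (v $ i) * (A *\<^sub>v v) $ i) \<ge> 0"
      using h eq by simp
  qed
  thus ?thesis unfolding psd_mat_def by simp
qed

lemma ip_delta: assumes "unitary_mat n U" "k < n"
  shows "(\<Sum>l<n. f l * cnj (ip n (cv U l) (cv U k)) * g l) = f k * g k"
proof -
  have "(\<Sum>l<n. f l * cnj (ip n (cv U l) (cv U k)) * g l) = (\<Sum>l<n. if l = k then f k * g k else 0)"
    using unitary_col[OF assms(1) _ assms(2)] by (intro sum.cong) auto
  thus ?thesis using assms(2) by simp
qed

lemma dec_qf_col: assumes "dec n U d A" "k < n"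
  shows "ip n (cv U k) (mv n A y) = complex_of_real (d k) * ip n (cv U k) y"
proof -
  have u: "unitary_mat n U" using assms unfolding dec_def by auto
  show ?thesis using dec_qf[OF assms(1)] ip_delta[OF u assms(2), of "\<lambda>l. complex_of_real (d l)" "\<lambda>l. ip n (cv U l) y"]
    by simp
qed

lemma dec_nonneg: assumes "dec n U d A" "psd_mat n A" "k < n" shows "d k \<ge> 0"
proof -
  have u: "unitary_mat n U" using assms unfolding dec_def by auto
  have A: "A \<in> carrier_mat n n" using dec_carrier[OF assms(1)] .
  have "ip n (cv U k) (mv n A (cv U k)) = complex_of_real (d k) * ip n (cv U k) (cv U k)"
    using dec_qf_col[OF assms(1) assms(3)] .
  also have "\<dots> = complex_of_real (d k)" using unitary_col[OF u assms(3) assms(3)] by simp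
  finally show ?thesis using assms(2) psd_iff[OF A] by (metis Re_complex_of_real)
qed

lemma mat_fun_unique: assumes U: "dec n U d A" and V: "dec n V e A"
  shows "U * real_diag n (f \<circ> d) * mat_adjoint U = V * real_diag n (f \<circ> e) * mat_adjoint V"
proof -
  have u: "unitary_mat n U" and v: "unitary_mat n V" using U V unfolding dec_def by auto
  have Uc: "U \<in> carrier_mat n n" and Vc: "V \<in> carrier_mat n n" using u v unitary_carrier by auto
  define M where "M i j = ip n (cv V i) (cv U j)" for i j
  have E1: "complex_of_real (e i) * M i j = complex_of_real (d j) * M i j" if i: "i < n" and j: "j < n" for i j
  proof -
    have "ip n (cv V i) (mv n A (cv U j)) = complex_of_real (e i) * M i j"
      using dec_qf_col[OF V i] M_def by simp
    moreover have h2: "ip n (cv V i) (mv n A (cv U j)) = complex_of_real (d j) * M i j"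
    proof -
      have "ip n (cv V i) (mv n A (cv U j)) = ip n (cv V i) (\<lambda>l. complex_of_real (d j) * cv U j l)"
        using dec_eigen[OF U j] by (intro ip_cong) (auto simp: cv_def)
      thus ?thesis by (simp add: ip_scale_right M_def)
    qed
    ultimately show ?thesis by metis
  qed
  have E2: "complex_of_real (f (e i)) * M i j = complex_of_real (f (d j)) * M i j" if i: "i < n" and j: "j < n" for i j
    using E1[OF i j] by (cases "M i j = 0") auto
  have E3: "U$$(a,j) = (\<Sum>i<n. V$$(a,i) * M i j)" if "a < n" for a j
    using unitary_expand[OF v that, of "cv U j"] by (simp add: M_def cv_def)
  have E4: "(\<Sum>j<n. M i j * cnj (U$$(b,j))) = cnj (V$$(b,i))" if "b < n" for b i
  proof -
    have "(\<Sum>j<n. M i j * cnj (U$$(b,j))) = cnj (\<Sum>j<n. U$$(b,j) * ip n (cv U j) (cv V i))"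
      by (simp add: M_def ip_cnj mult.commute)
    also have "\<dots> = cnj (V$$(b,i))" using unitary_expand[OF u that, of "cv V i"] by (simp add: cv_def)
    finally show ?thesis .
  qed
  show ?thesis
  proof (rule eq_matI)
    fix a b assume "a < dim_row (V * real_diag n (f \<circ> e) * mat_adjoint V)" "b < dim_col (V * real_diag n (f \<circ> e) * mat_adjoint V)"
    hence a: "a < n" and b: "b < n" using Vc by auto
    have "(U * real_diag n (f \<circ> d) * mat_adjoint U) $$ (a,b) = (\<Sum>j<n. U$$(a,j) * complex_of_real (f (d j)) * cnj (U$$(b,j)))"
      using diag_entry[OF Uc a b] by simp
    also have "\<dots> = (\<Sum>j<n. (\<Sum>i<n. V$$(a,i) * M i j) * complex_of_real (f (d j)) * cnj (U$$(b,j)))"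
      by (intro sum.cong refl) (simp only: E3[OF a])
    also have "\<dots> = (\<Sum>j<n. \<Sum>i<n. V$$(a,i) * (complex_of_real (f (d j)) * M i j) * cnj (U$$(b,j)))"
      by (simp add: sum_distrib_left sum_distrib_right mult_ac)
    also have "\<dots> = (\<Sum>j<n. \<Sum>i<n. V$$(a,i) * (complex_of_real (f (e i)) * M i j) * cnj (U$$(b,j)))"
      by (intro sum.cong refl, subst E2) auto
    also have "\<dots> = (\<Sum>i<n. \<Sum>j<n. V$$(a,i) * complex_of_real (f (e i)) * (M i j * cnj (U$$(b,j))))"
      by (subst sum.swap) (simp add: mult_ac)
    also have "\<dots> = (\<Sum>i<n. V$$(a,i) * complex_of_real (f (e i)) * cnj (V$$(b,i)))"
      using E4[OF b] by (simp add: sum_distrib_left[symmetric])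
    also have "\<dots> = (V * real_diag n (f \<circ> e) * mat_adjoint V) $$ (a,b)"
      using diag_entry[OF Vc a b] by simp
    finally show "(U * real_diag n (f \<circ> d) * mat_adjoint U) $$ (a,b) = (V * real_diag n (f \<circ> e) * mat_adjoint V) $$ (a,b)" .
  qed (use Uc Vc in auto)
qed

lemma mat_fun_dec: assumes "dec n U d A"
  shows "mat_fun n f A = U * real_diag n (f \<circ> d) * mat_adjoint U"
proof -
  let ?P = "\<lambda>M. \<exists>U d. unitary_mat n U \<and> A = U * real_diag n d * mat_adjoint U \<and> M = U * real_diag n (f \<circ> d) * mat_adjoint U"
  have ex: "?P (U * real_diag n (f \<circ> d) * mat_adjoint U)" using assms unfolding dec_def by blast
  have "?P (mat_fun n f A)" unfolding mat_fun_def using someI_ex[of ?P] ex by blast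
  then obtain U' d' where "dec n U' d' A" "mat_fun n f A = U' * real_diag n (f \<circ> d') * mat_adjoint U'"
    unfolding dec_def by blast
  thus ?thesis using mat_fun_unique[OF assms] by metis
qed

lemma dec_fun: "dec n U d A \<Longrightarrow> dec n U (f \<circ> d) (mat_fun n f A)"
  using mat_fun_dec[of n U d A f] unfolding dec_def by simp

lemma ip_adj: assumes "A \<in> carrier_mat n n"
  shows "ip n y (mv n A x) = ip n (mv n (mat_adjoint A) y) x"
proof -
  have "ip n y (mv n A x) = (\<Sum>i<n. \<Sum>j<n. cnj (y i) * A$$(i,j) * x j)"
    unfolding ip_def mv_def by (simp add: sum_distrib_left mult_ac)
  also have "\<dots> = (\<Sum>j<n. \<Sum>i<n. cnj (y i) * A$$(i,j) * x j)" by (rule sum.swap)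
  also have "\<dots> = ip n (mv n (mat_adjoint A) y) x"
    unfolding ip_def mv_def using assms by (auto simp: sum_distrib_left sum_distrib_right mult_ac intro!: sum.cong)
  finally show ?thesis .
qed

lemma mv_mult: assumes "A \<in> carrier_mat n n" "B \<in> carrier_mat n n" "i < n"
  shows "mv n (A * B) x i = mv n A (mv n B x) i"
proof -
  have "mv n (A * B) x i = (\<Sum>j<n. \<Sum>l<n. A$$(i,l) * B$$(l,j) * x j)"
    unfolding mv_def using mult_entry[OF assms(1,2) assms(3)] by (simp add: sum_distrib_right del: index_mult_mat)
  also have "\<dots> = (\<Sum>l<n. \<Sum>j<n. A$$(i,l) * B$$(l,j) * x j)" by (rule sum.swap)
  also have "\<dots> = mv n A (mv n B x) i"
    unfolding mv_def by (simp add: sum_distrib_left mult_ac)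
  finally show ?thesis .
qed

lemma tangent_powr: fixes r q :: real assumes "r > 0" "q \<ge> 0" shows "1 + q - q * r \<le> r powr (-q)"
proof -
  have "1 + (- q * ln r) \<le> exp (- q * ln r)" using Transcendental.exp_ge_add_one_self[of "- q * ln r"] by simp
  moreover have "ln r \<le> r - 1" using ln_le_minus_one[OF assms(1)] .
  hence "q * (1 + ln r) \<le> q * r" using assms(2) by (intro mult_left_mono) auto
  hence "1 + q - q * r \<le> 1 + (- q * ln r)" by (simp add: algebra_simps)
  moreover have "exp (- q * ln r) = r powr (-q)" using assms(1) by (simp add: powr_def)
  ultimately show ?thesis by linarith
qed

lemma qf_dec_re: assumes "dec n U d A"
  shows "Re (ip n z (mv n A z)) = (\<Sum>k<n. d k * (cmod (ip n (cv U k) z))^2)"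
proof -
  have "ip n z (mv n A z) = (\<Sum>k<n. complex_of_real (d k * (cmod (ip n (cv U k) z))^2))"
    unfolding dec_qf[OF assms]
  proof (intro sum.cong refl)
    fix k
    have "cnj (ip n (cv U k) z) * ip n (cv U k) z = complex_of_real ((cmod (ip n (cv U k) z))^2)"
      by (simp only: complex_norm_square mult.commute)
    thus "complex_of_real (d k) * cnj (ip n (cv U k) z) * ip n (cv U k) z = complex_of_real (d k * (cmod (ip n (cv U k) z))^2)"
      by (simp add: mult.assoc)
  qed
  thus ?thesis by (simp only: Re_sum Re_complex_of_real)
qed

lemma ip_comb: "ip n z (\<lambda>i. \<Sum>l<n. V$$(i,l) * a l) = (\<Sum>l<n. a l * ip n z (cv V l))"
proof -
  have "ip n z (\<lambda>i. \<Sum>l<n. V$$(i,l) * a l) = (\<Sum>i<n. \<Sum>l<n. cnj (z i) * V$$(i,l) * a l)"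
    unfolding ip_def by (simp add: sum_distrib_left mult_ac)
  also have "\<dots> = (\<Sum>l<n. \<Sum>i<n. cnj (z i) * V$$(i,l) * a l)" by (rule sum.swap)
  also have "\<dots> = (\<Sum>l<n. a l * ip n z (cv V l))"
    unfolding ip_def cv_def by (simp add: sum_distrib_left mult_ac)
  finally show ?thesis .
qed

lemma ip_comb_col: assumes "unitary_mat n V" "j < n"
  shows "ip n (cv V j) (\<lambda>i. \<Sum>l<n. V$$(i,l) * a l) = a j"
proof -
  have "ip n (cv V j) (\<lambda>i. \<Sum>l<n. V$$(i,l) * a l) = (\<Sum>l<n. a l * ip n (cv V j) (cv V l))"
    by (rule ip_comb)
  also have "\<dots> = (\<Sum>l<n. if l = j then a j else 0)"
    using unitary_col[OF assms(1) assms(2)] by (intro sum.cong) auto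
  finally show ?thesis using assms(2) by simp
qed

lemma mv_scale: "mv n A (\<lambda>i. a * z i) i = a * mv n A z i"
  unfolding mv_def by (simp add: sum_distrib_left mult_ac)

lemma trace_basis: assumes "unitary_mat n V" "A \<in> carrier_mat n n"
  shows "(\<Sum>j<n. ip n (cv V j) (mv n A (cv V j))) = mat_trace A"
proof -
  have "(\<Sum>j<n. ip n (cv V j) (mv n A (cv V j))) = (\<Sum>j<n. \<Sum>i<n. \<Sum>l<n. A$$(i,l) * (V$$(l,j) * cnj (V$$(i,j))))"
    unfolding ip_def mv_def cv_def by (simp add: sum_distrib_left mult_ac)
  also have "\<dots> = (\<Sum>i<n. \<Sum>j<n. \<Sum>l<n. A$$(i,l) * (V$$(l,j) * cnj (V$$(i,j))))" by (rule sum.swap)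
  also have "\<dots> = (\<Sum>i<n. \<Sum>l<n. \<Sum>j<n. A$$(i,l) * (V$$(l,j) * cnj (V$$(i,j))))"
    by (rule sum.cong[OF refl], rule sum.swap)
  also have "\<dots> = (\<Sum>i<n. \<Sum>l<n. A$$(i,l) * (if l = i then 1 else 0))"
    using unitary_row[OF assms(1)] by (intro sum.cong refl) (simp add: sum_distrib_left[symmetric])
  also have "\<dots> = (\<Sum>i<n. \<Sum>l<n. if l = i then A$$(i,i) else 0)" by (intro sum.cong refl) auto
  also have "\<dots> = (\<Sum>i<n. A$$(i,i))" by simp
  also have "\<dots> = mat_trace A" unfolding mat_trace_def using assms(2) by simp
  finally show ?thesis .
qed

lemma psd_herm: "psd_mat n A \<Longrightarrow> mat_adjoint A = A"
  unfolding psd_mat_def hermitian_mat_def by auto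

lemma psd_carrier: "psd_mat n A \<Longrightarrow> A \<in> carrier_mat n n"
  unfolding psd_mat_def hermitian_mat_def by auto

lemma psd_qf: "psd_mat n A \<Longrightarrow> 0 \<le> Re (ip n x (mv n A x))"
  using psd_iff[OF psd_carrier] by blast

lemma dom_psd: assumes sc: "\<sigma> \<in> carrier_mat n n" and sh: "mat_adjoint \<sigma> = \<sigma>" and rpsd: "psd_mat n \<rho>"
    and dom: "\<And>x. Re (ip n x (mv n \<rho> x)) \<le> lam * Re (ip n x (mv n \<sigma> x))" and lam: "lam > 0"
  shows "psd_mat n \<sigma>"
proof -
  have "0 \<le> Re (ip n x (mv n \<sigma> x))" for x
  proof -
    have "0 \<le> lam * Re (ip n x (mv n \<sigma> x))" using psd_qf[OF rpsd, of x] dom[of x] by linarith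
    thus ?thesis using lam by (simp add: zero_le_mult_iff)
  qed
  thus ?thesis using psd_iff[OF sc] sc sh unfolding hermitian_mat_def by auto
qed

lemma psd_kernel: assumes "psd_mat n \<rho>" "Re (ip n z (mv n \<rho> z)) \<le> 0" "i < n"
  shows "mv n \<rho> z i = 0"
proof -
  have rc: "\<rho> \<in> carrier_mat n n" using psd_carrier[OF assms(1)] .
  obtain Q r where Qd: "dec n Q r \<rho>" using herm_dec[OF rc psd_herm[OF assms(1)]] by blast
  have r0: "r k \<ge> 0" if "k < n" for k using dec_nonneg[OF Qd assms(1) that] .
  have "(\<Sum>k<n. r k * (cmod (ip n (cv Q k) z))^2) = 0"
    using qf_dec_re[OF Qd, of z] assms(2) psd_qf[OF assms(1), of z] by linarith
  hence "\<forall>k\<in>{..<n}. r k * (cmod (ip n (cv Q k) z))^2 = 0"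
    using r0 by (subst sum_nonneg_eq_0_iff[symmetric]) auto
  hence z: "complex_of_real (r k) * ip n (cv Q k) z = 0" if "k < n" for k using that by auto
  have "mv n \<rho> z i = (\<Sum>k<n. Q$$(i,k) * complex_of_real (r k) * ip n (cv Q k) z)"
    using dec_mv[OF Qd assms(3)] .
  also have "\<dots> = 0" using z by (intro sum.neutral) (simp add: mult.assoc)
  finally show ?thesis .
qed

lemma range_incl:
  assumes rpsd: "psd_mat n \<rho>" and sc: "\<sigma> \<in> carrier_mat n n" and sh: "mat_adjoint \<sigma> = \<sigma>"
    and dom: "\<And>x. Re (ip n x (mv n \<rho> x)) \<le> lam * Re (ip n x (mv n \<sigma> x))" and lam: "lam > 0"
  shows "mat_range n \<rho> \<subseteq> mat_range n \<sigma>"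
proof
  have rc: "\<rho> \<in> carrier_mat n n" using psd_carrier[OF rpsd] .
  obtain V s where Vd: "dec n V s \<sigma>" using herm_dec[OF sc sh] by blast
  have v: "unitary_mat n V" using Vd unfolding dec_def by auto
  have spsd: "psd_mat n \<sigma>" using dom_psd[OF sc sh rpsd dom lam] .
  have s0: "s j \<ge> 0" if "j < n" for j using dec_nonneg[OF Vd spsd that] .
  have ker: "mv n \<rho> (cv V j) i = 0" if j: "j < n" and sj: "s j = 0" and i: "i < n" for i j
  proof -
    have "ip n (cv V j) (mv n \<sigma> (cv V j)) = complex_of_real (s j) * ip n (cv V j) (cv V j)"
      using dec_qf_col[OF Vd j] .
    hence "Re (ip n (cv V j) (mv n \<sigma> (cv V j))) = 0" using sj by simp
    hence "Re (ip n (cv V j) (mv n \<rho> (cv V j))) \<le> 0" using dom[of "cv V j"] by simp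
    thus ?thesis using psd_kernel[OF rpsd _ i] by blast
  qed
  fix y assume "y \<in> mat_range n \<rho>"
  then obtain w where w: "w \<in> carrier_vec n" and y: "y = \<rho> *\<^sub>v w" unfolding mat_range_def by blast
  define rv where "rv = mv n \<rho> (\<lambda>j. w$j)"
  define a where "a j = ip n (cv V j) rv" for j
  have a0: "a j = 0" if j: "j < n" and sj: "s j = 0" for j
  proof -
    have "a j = ip n (mv n (mat_adjoint \<rho>) (cv V j)) (\<lambda>j. w$j)"
      unfolding a_def rv_def using ip_adj[OF rc] by simp
    also have "\<dots> = ip n (\<lambda>_. 0) (\<lambda>j. w$j)"
      using ker[OF j sj] psd_herm[OF rpsd] by (intro ip_cong) auto
    also have "\<dots> = 0" by (simp add: ip_def)
    finally show ?thesis .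
  qed
  define u where "u = vec n (\<lambda>i. \<Sum>l<n. V$$(i,l) * (if s l > 0 then a l / complex_of_real (s l) else 0))"
  have u: "u \<in> carrier_vec n" unfolding u_def by simp
  have "\<sigma> *\<^sub>v u = \<rho> *\<^sub>v w"
  proof (rule eq_vecI)
    fix i assume "i < dim_vec (\<rho> *\<^sub>v w)"
    hence i: "i < n" using rc by simp
    have ipu: "ip n (cv V k) (\<lambda>j. u$j) = (if s k > 0 then a k / complex_of_real (s k) else 0)" if k: "k < n" for k
    proof -
      have "ip n (cv V k) (\<lambda>j. u$j) = ip n (cv V k) (\<lambda>i. \<Sum>l<n. V$$(i,l) * (if s l > 0 then a l / complex_of_real (s l) else 0))"
        by (intro ip_cong) (auto simp: u_def)
      thus ?thesis using ip_comb_col[OF v k] by simp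
    qed
    have "(\<sigma> *\<^sub>v u) $ i = mv n \<sigma> (\<lambda>j. u$j) i" using mulvec_mv[OF sc u i] .
    also have "\<dots> = (\<Sum>k<n. V$$(i,k) * complex_of_real (s k) * ip n (cv V k) (\<lambda>j. u$j))"
      using dec_mv[OF Vd i] .
    also have "\<dots> = (\<Sum>k<n. V$$(i,k) * a k)"
    proof (intro sum.cong refl)
      fix k assume "k \<in> {..<n}"
      hence k: "k < n" by simp
      show "V$$(i,k) * complex_of_real (s k) * ip n (cv V k) (\<lambda>j. u$j) = V$$(i,k) * a k"
      proof (cases "s k > 0")
        case True thus ?thesis using ipu[OF k] by simp
      next
        case False hence "s k = 0" using s0[OF k] by simp
        thus ?thesis using ipu[OF k] a0[OF k] by simp
      qed
    qed
    also have "\<dots> = rv i" using unitary_expand[OF v i, of rv] by (simp add: a_def mult.commute)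
    also have "\<dots> = (\<rho> *\<^sub>v w) $ i" unfolding rv_def using mulvec_mv[OF rc w i] by simp
    finally show "(\<sigma> *\<^sub>v u) $ i = (\<rho> *\<^sub>v w) $ i" .
  qed (use sc rc in auto)
  hence "y = \<sigma> *\<^sub>v u" using y by simp
  thus "y \<in> mat_range n \<sigma>" unfolding mat_range_def using u by blast
qed

lemma pwsq: fixes s a :: real assumes "s > 0" shows "(s powr a)^2 = s powr (2*a)"
  using powr_power[of s a 2] assms by simp

lemma pw1: fixes s \<alpha> :: real assumes "s > 0" "\<alpha> > 0"
  shows "s * (s powr ((1 - \<alpha>) / (2 * \<alpha>)))^2 * (s powr (-1/\<alpha>))^2 = s powr (-1/\<alpha>)"
proof -
  have "s * (s powr ((1 - \<alpha>) / (2 * \<alpha>)))^2 * (s powr (-1/\<alpha>))^2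
      = s powr 1 * s powr (2 * ((1 - \<alpha>) / (2 * \<alpha>))) * s powr (2 * (-1/\<alpha>))"
    using assms by (simp only: pwsq powr_one')
  also have "\<dots> = s powr (1 + 2 * ((1 - \<alpha>) / (2 * \<alpha>)) + 2 * (-1/\<alpha>))"
    by (simp only: powr_add)
  also have "1 + 2 * ((1 - \<alpha>) / (2 * \<alpha>)) + 2 * (-1/\<alpha>) = -1/\<alpha>"
    using assms by (simp add: field_simps)
  finally show ?thesis .
qed

lemma pw2: fixes s \<alpha> :: real assumes "s > 0" "\<alpha> > 0"
  shows "s powr ((\<alpha> - 1) / \<alpha>) * (s powr ((1 - \<alpha>) / (2 * \<alpha>)))^2 = 1"
proof -
  have "s powr ((\<alpha> - 1) / \<alpha>) * (s powr ((1 - \<alpha>) / (2 * \<alpha>)))^2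
      = s powr ((\<alpha> - 1) / \<alpha>) * s powr (2 * ((1 - \<alpha>) / (2 * \<alpha>)))"
    using assms by (simp only: pwsq)
  also have "\<dots> = s powr ((\<alpha> - 1) / \<alpha> + 2 * ((1 - \<alpha>) / (2 * \<alpha>)))"
    by (simp only: powr_add)
  also have "(\<alpha> - 1) / \<alpha> + 2 * ((1 - \<alpha>) / (2 * \<alpha>)) = 0"
    using assms by (simp add: field_simps)
  finally show ?thesis using assms by simp
qed

lemma pw3: fixes t \<alpha> :: real assumes "t > 0" "\<alpha> > 0"
  shows "(t powr (-1/\<alpha>)) powr (-(\<alpha> - 1)) = t powr ((\<alpha> - 1) / \<alpha>)"
proof -
  have "(t powr (-1/\<alpha>)) powr (-(\<alpha> - 1)) = t powr (-1/\<alpha> * -(\<alpha> - 1))" by (simp add: powr_powr)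
  also have "-1/\<alpha> * -(\<alpha> - 1) = (\<alpha> - 1) / \<alpha>" using assms by (simp add: field_simps)
  finally show ?thesis .
qed

lemma pw4: fixes x \<alpha> :: real assumes "x \<ge> 0" "\<alpha> > 1"
  shows "x powr \<alpha> = x * x powr (\<alpha> - 1)"
proof (cases "x = 0")
  case True thus ?thesis by simp
next
  case False
  hence "x > 0" using assms by simp
  hence "x * x powr (\<alpha> - 1) = x powr (1 + (\<alpha> - 1))" by (simp add: powr_mult_base)
  thus ?thesis by simp
qed

lemma pw5: fixes t H q :: real assumes "t > 0" "H > 0" "q \<ge> 0"
  shows "H powr (-q) * (1 + q - q * (t / H)) \<le> t powr (-q)"
proof -
  have "1 + q - q * (t / H) \<le> (t / H) powr (-q)" using tangent_powr[of "t/H" q] assms by simp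
  hence "H powr (-q) * (1 + q - q * (t / H)) \<le> H powr (-q) * (t / H) powr (-q)"
    by (rule mult_left_mono) simp
  also have "H powr (-q) * (t / H) powr (-q) = t powr (-q)"
    using assms by (simp add: powr_divide)
  finally show ?thesis .
qed

lemma pw6: fixes x lam H q :: real assumes "x \<ge> 0" "x \<le> lam / H" "q \<ge> 0" "H > 0"
  shows "x powr q \<le> lam powr q * H powr (-q)"
proof -
  have "x powr q \<le> (lam / H) powr q" using assms by (intro powr_mono2) auto
  also have "\<dots> = lam powr q * H powr (-q)"
  proof -
    have "lam \<ge> 0" using assms by (metis divide_nonneg_pos order.trans not_le less_imp_le divide_neg_pos)
    thus ?thesis using assms by (simp add: powr_divide powr_minus_divide)
  qed
  finally show ?thesis .
qed

lemma mv_cong: "(\<And>i. i < n \<Longrightarrow> z i = z' i) \<Longrightarrow> mv n A z = mv n A z'"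
  unfolding mv_def by (intro ext sum.cong) auto

lemma sandwich_bound:
  fixes n :: nat and \<rho> \<sigma> :: "complex mat" and lam \<alpha> :: real
  assumes rpsd: "psd_mat n \<rho>"
    and sc: "\<sigma> \<in> carrier_mat n n" and sh: "mat_adjoint \<sigma> = \<sigma>"
    and dom: "\<And>x. Re (ip n x (mv n \<rho> x)) \<le> lam * Re (ip n x (mv n \<sigma> x))"
    and lam: "lam > 0" and al: "\<alpha> > 1"
  defines "S \<equiv> mat_fun n (\<lambda>x. x powr ((1 - \<alpha>) / (2 * \<alpha>))) \<sigma>"
  shows "0 \<le> Re (mat_trace (mat_fun n (\<lambda>x. x powr \<alpha>) (S * \<rho> * S)))
       \<and> Re (mat_trace (mat_fun n (\<lambda>x. x powr \<alpha>) (S * \<rho> * S))) \<le> lam powr (\<alpha> - 1) * Re (mat_trace \<rho>)"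
proof -
  define X where "X = S * \<rho> * S"
  define P where "P = mat_fun n (\<lambda>x. x powr \<alpha>) X"
  have rc: "\<rho> \<in> carrier_mat n n" using psd_carrier[OF rpsd] .
  have rh: "mat_adjoint \<rho> = \<rho>" using psd_herm[OF rpsd] .
  obtain V s where Vd: "dec n V s \<sigma>" using herm_dec[OF sc sh] by blast
  have v: "unitary_mat n V" using Vd unfolding dec_def by auto
  have spsd: "psd_mat n \<sigma>" using dom_psd[OF sc sh rpsd dom lam] .
  have s0: "s j \<ge> 0" if "j < n" for j using dec_nonneg[OF Vd spsd that] .
  define g where "g t = t powr ((1 - \<alpha>) / (2 * \<alpha>))" for t :: real
  have g0: "g 0 = 0" by (simp add: g_def)
  have gnn: "g t \<ge> 0" for t by (simp add: g_def)
  have Sd: "dec n V (g \<circ> s) S" unfolding S_def g_def by (rule dec_fun[OF Vd])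
  have Sc: "S \<in> carrier_mat n n" using dec_carrier[OF Sd] .
  have Sh: "mat_adjoint S = S" using dec_herm[OF Sd] .
  have ipS: "ip n (cv V j) (mv n S y) = complex_of_real (g (s j)) * ip n (cv V j) y" if "j < n" for j y
    using dec_qf_col[OF Sd that] by simp
  have Scol: "mv n S (cv V j) i = complex_of_real (g (s j)) * cv V j i" if "j < n" "i < n" for i j
    using dec_eigen[OF Sd that] by (simp add: cv_def)
  have Xc: "X \<in> carrier_mat n n" unfolding X_def using Sc rc by auto
  have mvX: "mv n X y i = mv n S (mv n \<rho> (mv n S y)) i" if "i < n" for y i
  proof -
    have "mv n X y i = mv n (S * \<rho>) (mv n S y) i" unfolding X_def using Sc rc that by (intro mv_mult) auto
    also have "\<dots> = mv n S (mv n \<rho> (mv n S y)) i" using Sc rc that by (intro mv_mult) auto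
    finally show ?thesis .
  qed
  have qfX: "ip n y (mv n X y) = ip n (mv n S y) (mv n \<rho> (mv n S y))" for y
  proof -
    have "ip n y (mv n X y) = ip n y (mv n S (mv n \<rho> (mv n S y)))" using mvX by (intro ip_cong) auto
    also have "\<dots> = ip n (mv n (mat_adjoint S) y) (mv n \<rho> (mv n S y))" using ip_adj[OF Sc] .
    finally show ?thesis using Sh by simp
  qed
  have Xh: "mat_adjoint X = X"
  proof -
    have "mat_adjoint X = mat_adjoint S * mat_adjoint (S * \<rho>)" unfolding X_def using Sc rc by (intro adj_mult[of _ n n _ n]) auto
    also have "mat_adjoint (S * \<rho>) = mat_adjoint \<rho> * mat_adjoint S" using Sc rc by (intro adj_mult[of _ n n _ n]) auto
    finally show ?thesis unfolding X_def using Sh rh Sc rc by (simp add: assoc_mult_mat[of _ n n _ n _ n])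
  qed
  have Xpsd: "psd_mat n X"
    using psd_iff[OF Xc] Xc Xh qfX psd_qf[OF rpsd] unfolding hermitian_mat_def by auto
  obtain W x where Wd: "dec n W x X" using herm_dec[OF Xc Xh] by blast
  have w: "unitary_mat n W" using Wd unfolding dec_def by auto
  have x0: "x k \<ge> 0" if "k < n" for k using dec_nonneg[OF Wd Xpsd that] .
  have Pd: "dec n W ((\<lambda>t. t powr \<alpha>) \<circ> x) P" unfolding P_def by (rule dec_fun[OF Wd])
  have trP: "Re (mat_trace P) = (\<Sum>k<n. x k powr \<alpha>)" using dec_trace[OF Pd] by simp
  define c where "c k j = ip n (cv V j) (cv W k)" for k j
  define wt where "wt k j = (cmod (c k j))^2" for k j
  define J where "J = {j \<in> {..<n}. 0 < s j}"
  define q where "q = \<alpha> - 1"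
  define be where "be = (\<alpha> - 1) / \<alpha>"
  have q: "q > 0" using al q_def by simp
  have finJ: "finite J" unfolding J_def by simp
  have K1: "c k j = 0" if k: "k < n" and j: "j < n" and xk: "x k > 0" and sj: "s j = 0" for k j
  proof -
    have "ip n (cv V j) (mv n X (cv W k)) = ip n (cv V j) (\<lambda>i. complex_of_real (x k) * cv W k i)"
      using dec_eigen[OF Wd k] by (intro ip_cong) (auto simp: cv_def)
    hence e1: "ip n (cv V j) (mv n X (cv W k)) = complex_of_real (x k) * c k j"
      by (simp add: ip_scale_right c_def)
    have "ip n (cv V j) (mv n X (cv W k)) = ip n (cv V j) (mv n S (mv n \<rho> (mv n S (cv W k))))"
      using mvX by (intro ip_cong) auto
    also have "\<dots> = 0" using ipS[OF j] sj g0 by simp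
    finally show ?thesis using e1 xk by simp
  qed
  have K2: "(\<Sum>j<n. wt k j) = 1" if k: "k < n" for k
  proof -
    have "1 = ip n (cv W k) (cv W k)" using unitary_col[OF w k k] by simp
    also have "\<dots> = (\<Sum>j<n. cnj (c k j) * c k j)" unfolding c_def by (rule unitary_parseval[OF v])
    also have "\<dots> = (\<Sum>j<n. complex_of_real (wt k j))"
      unfolding wt_def by (intro sum.cong refl) (simp only: complex_norm_square mult.commute)
    finally have "complex_of_real (\<Sum>j<n. wt k j) = 1" by simp
    thus ?thesis by (metis of_real_eq_1_iff)
  qed
  have wt0: "wt k j \<ge> 0" for k j unfolding wt_def by simp
  have K3: "x k * (cmod (ip n (cv W k) y))^2 \<le> lam * (\<Sum>j<n. s j * (g (s j))^2 * (cmod (ip n (cv V j) y))^2)"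
    if k: "k < n" for k y
  proof -
    have "x k * (cmod (ip n (cv W k) y))^2 \<le> (\<Sum>l<n. x l * (cmod (ip n (cv W l) y))^2)"
      using k x0 by (intro member_le_sum) auto
    also have "\<dots> = Re (ip n y (mv n X y))" using qf_dec_re[OF Wd] by simp
    also have "\<dots> = Re (ip n (mv n S y) (mv n \<rho> (mv n S y)))" using qfX by simp
    also have "\<dots> \<le> lam * Re (ip n (mv n S y) (mv n \<sigma> (mv n S y)))" using dom .
    also have "\<dots> = lam * (\<Sum>j<n. s j * (cmod (ip n (cv V j) (mv n S y)))^2)"
      using qf_dec_re[OF Vd] by simp
    also have "\<dots> = lam * (\<Sum>j<n. s j * (g (s j))^2 * (cmod (ip n (cv V j) y))^2)"
      using ipS gnn by (simp add: norm_mult power_mult_distrib mult.assoc)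
    finally show ?thesis .
  qed
  have sJ: "(\<Sum>j<n. f j) = (\<Sum>j\<in>J. f j)" if "\<And>j. j < n \<Longrightarrow> \<not> 0 < s j \<Longrightarrow> f j = 0" for f :: "nat \<Rightarrow> real"
    unfolding J_def using that by (intro sum.mono_neutral_right) auto
  have Kmain: "x k powr \<alpha> \<le> lam powr q * x k * (\<Sum>j\<in>J. wt k j * s j powr be)" if k: "k < n" for k
  proof (cases "x k = 0")
    case True thus ?thesis by simp
  next
    case False
    hence xk: "x k > 0" using x0[OF k] by simp
    define t where "t j = s j powr (-1/\<alpha>)" for j
    define h where "h j = (if 0 < s j then t j else 0)" for j
    define yv where "yv i = (\<Sum>l<n. V$$(i,l) * (complex_of_real (h l) * c k l))" for i
    define H where "H = (\<Sum>j<n. h j * wt k j)"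
    have ipV: "ip n (cv V j) yv = complex_of_real (h j) * c k j" if "j < n" for j
      unfolding yv_def using ip_comb_col[OF v that] .
    have ipW: "ip n (cv W k) yv = complex_of_real H"
    proof -
      have "ip n (cv W k) yv = (\<Sum>l<n. (complex_of_real (h l) * c k l) * ip n (cv W k) (cv V l))"
        unfolding yv_def by (rule ip_comb)
      also have "\<dots> = (\<Sum>l<n. complex_of_real (h l * wt k l))"
      proof (intro sum.cong refl)
        fix l
        have "ip n (cv W k) (cv V l) = cnj (c k l)" unfolding c_def by (simp add: ip_cnj)
        moreover have "c k l * cnj (c k l) = complex_of_real (wt k l)" unfolding wt_def by (simp only: complex_norm_square)
        ultimately show "(complex_of_real (h l) * c k l) * ip n (cv W k) (cv V l) = complex_of_real (h l * wt k l)"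
          by (simp add: mult.assoc)
      qed
      also have "\<dots> = complex_of_real H" unfolding H_def by simp
      finally show ?thesis .
    qed
    have hw: "s j * (g (s j))^2 * (cmod (complex_of_real (h j) * c k j))^2 = h j * wt k j" if j: "j < n" for j
    proof (cases "0 < s j")
      case True
      have "s j * (g (s j))^2 * (cmod (complex_of_real (h j) * c k j))^2 = (s j * (g (s j))^2 * (h j)^2) * wt k j"
        unfolding wt_def by (simp add: norm_mult power_mult_distrib)
      also have "s j * (g (s j))^2 * (h j)^2 = h j" using pw1[OF True] al True unfolding g_def h_def t_def by simp
      finally show ?thesis .
    next
      case False thus ?thesis by (simp add: h_def)
    qed
    have main: "x k * H^2 \<le> lam * H"
    proof -
      have "x k * H^2 = x k * (cmod (ip n (cv W k) yv))^2" using ipW by simp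
      also have "\<dots> \<le> lam * (\<Sum>j<n. s j * (g (s j))^2 * (cmod (ip n (cv V j) yv))^2)" using K3[OF k] .
      also have "\<dots> = lam * H"
        unfolding H_def using ipV hw by simp
      finally show ?thesis .
    qed
    have wJ: "(\<Sum>j\<in>J. wt k j) = 1"
    proof -
      have "(\<Sum>j<n. wt k j) = (\<Sum>j\<in>J. wt k j)"
      proof (rule sJ)
        fix j assume "j < n" "\<not> 0 < s j"
        hence "s j = 0" using s0 by force
        thus "wt k j = 0" using K1[OF k \<open>j < n\<close> xk] by (simp add: wt_def)
      qed
      thus ?thesis using K2[OF k] by simp
    qed
    have HJ: "H = (\<Sum>j\<in>J. t j * wt k j)"
    proof -
      have "H = (\<Sum>j\<in>J. h j * wt k j)" unfolding H_def by (rule sJ) (simp add: h_def)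
      also have "\<dots> = (\<Sum>j\<in>J. t j * wt k j)" by (intro sum.cong refl) (simp add: h_def J_def)
      finally show ?thesis .
    qed
    have tpos: "t j > 0" if "j \<in> J" for j using that unfolding J_def t_def by auto
    have Hpos: "H > 0"
    proof (rule ccontr)
      assume "\<not> H > 0"
      moreover have "H \<ge> 0" unfolding HJ using tpos wt0 by (intro sum_nonneg) (simp add: less_imp_le)
      ultimately have "H = 0" by simp
      hence "\<forall>j\<in>J. t j * wt k j = 0" unfolding HJ using finJ tpos wt0
        by (subst sum_nonneg_eq_0_iff[symmetric]) (auto intro: mult_nonneg_nonneg less_imp_le)
      hence tw: "t j * wt k j = 0" if "j \<in> J" for j using that by blast
      have "\<forall>j\<in>J. wt k j = 0"
      proof
        fix j assume jJ: "j \<in> J"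
        have "t j > 0" using tpos[OF jJ] .
        thus "wt k j = 0" using tw[OF jJ] by simp
      qed
      hence "(\<Sum>j\<in>J. wt k j) = 0" by simp
      thus False using wJ by simp
    qed
    have xH: "x k \<le> lam / H"
    proof -
      have "(x k * H) * H \<le> lam * H" using main by (simp add: power2_eq_square mult.assoc)
      hence "x k * H \<le> lam" using Hpos by (rule mult_right_le_imp_le)
      thus ?thesis using Hpos by (simp add: pos_le_divide_eq)
    qed
    have jensen: "H powr (-q) \<le> (\<Sum>j\<in>J. wt k j * t j powr (-q))"
    proof -
      have le: "(\<Sum>j\<in>J. wt k j * (H powr (-q) * (1 + q - q * (t j / H)))) \<le> (\<Sum>j\<in>J. wt k j * t j powr (-q))"
        using pw5[OF tpos Hpos] q wt0 by (intro sum_mono mult_left_mono) auto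
      have eqj: "wt k j * (H powr (-q) * (1 + q - q * (t j / H))) = H powr (-q) * (1 + q) * wt k j - (H powr (-q) * q / H) * (t j * wt k j)" for j
        using Hpos by (simp add: field_simps)
      have "(\<Sum>j\<in>J. wt k j * (H powr (-q) * (1 + q - q * (t j / H)))) = H powr (-q) * (1 + q) * (\<Sum>j\<in>J. wt k j) - (H powr (-q) * q / H) * (\<Sum>j\<in>J. t j * wt k j)"
        by (simp only: eqj sum_subtractf sum_distrib_left)
      also have "\<dots> = H powr (-q)" using wJ HJ[symmetric] Hpos by (simp add: field_simps)
      finally show ?thesis using le by simp
    qed
    have tq: "(\<Sum>j\<in>J. wt k j * t j powr (-q)) = (\<Sum>j\<in>J. wt k j * s j powr be)"
    proof (intro sum.cong refl)
      fix j assume "j \<in> J"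
      hence "s j > 0" unfolding J_def by auto
      thus "wt k j * t j powr (-q) = wt k j * s j powr be"
        using pw3[of "s j" \<alpha>] al unfolding t_def q_def be_def by simp
    qed
    have "x k powr \<alpha> = x k * x k powr q" using pw4[OF x0[OF k] al] q_def by simp
    also have "\<dots> \<le> x k * (lam powr q * H powr (-q))"
      using pw6[OF x0[OF k] xH _ Hpos, of q] q x0[OF k] by (intro mult_left_mono) auto
    also have "\<dots> \<le> x k * (lam powr q * (\<Sum>j\<in>J. wt k j * t j powr (-q)))"
      using jensen x0[OF k] by (intro mult_left_mono) auto
    also have "\<dots> = lam powr q * x k * (\<Sum>j\<in>J. wt k j * s j powr be)" using tq by simp
    finally show ?thesis .
  qed
  have K8: "(\<Sum>k<n. x k * wt k j) = (g (s j))^2 * Re (ip n (cv V j) (mv n \<rho> (cv V j)))" if j: "j < n" for j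
  proof -
    have "(\<Sum>k<n. x k * wt k j) = Re (ip n (cv V j) (mv n X (cv V j)))"
      unfolding qf_dec_re[OF Wd] wt_def c_def
      by (intro sum.cong refl) (simp add: ip_cnj[of n "cv W _" "cv V j", symmetric])
    also have "\<dots> = Re (ip n (mv n S (cv V j)) (mv n \<rho> (mv n S (cv V j))))" using qfX by simp
    also have "ip n (mv n S (cv V j)) (mv n \<rho> (mv n S (cv V j))) = ip n (\<lambda>i. complex_of_real (g (s j)) * cv V j i) (\<lambda>i. complex_of_real (g (s j)) * mv n \<rho> (cv V j) i)"
    proof (rule ip_cong)
      fix i assume i: "i < n"
      show "mv n S (cv V j) i = complex_of_real (g (s j)) * cv V j i" using Scol[OF j i] .
      have "mv n \<rho> (mv n S (cv V j)) = mv n \<rho> (\<lambda>i. complex_of_real (g (s j)) * cv V j i)"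
        using Scol[OF j] by (intro mv_cong) auto
      thus "mv n \<rho> (mv n S (cv V j)) i = complex_of_real (g (s j)) * mv n \<rho> (cv V j) i" by (simp add: mv_scale)
    qed
    also have "\<dots> = complex_of_real ((g (s j))^2) * ip n (cv V j) (mv n \<rho> (cv V j))"
      by (simp add: ip_scale_left ip_scale_right power2_eq_square)
    finally show ?thesis by simp
  qed
  have qr0: "0 \<le> Re (ip n (cv V j) (mv n \<rho> (cv V j)))" for j using psd_qf[OF rpsd] .
  have "Re (mat_trace P) = (\<Sum>k<n. x k powr \<alpha>)" using trP .
  also have "\<dots> \<le> (\<Sum>k<n. lam powr q * x k * (\<Sum>j\<in>J. wt k j * s j powr be))" using Kmain by (intro sum_mono) auto
  also have "\<dots> = (\<Sum>k<n. \<Sum>j\<in>J. lam powr q * (s j powr be * (x k * wt k j)))" by (simp add: sum_distrib_left mult_ac)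
  also have "\<dots> = (\<Sum>j\<in>J. \<Sum>k<n. lam powr q * (s j powr be * (x k * wt k j)))" by (rule sum.swap)
  also have "\<dots> = lam powr q * (\<Sum>j\<in>J. s j powr be * (\<Sum>k<n. x k * wt k j))" by (simp add: sum_distrib_left)
  also have "\<dots> = lam powr q * (\<Sum>j\<in>J. Re (ip n (cv V j) (mv n \<rho> (cv V j))))"
  proof -
    have "(\<Sum>j\<in>J. s j powr be * (\<Sum>k<n. x k * wt k j)) = (\<Sum>j\<in>J. Re (ip n (cv V j) (mv n \<rho> (cv V j))))"
    proof (intro sum.cong refl)
      fix j assume "j \<in> J"
      hence j: "j < n" and sj: "s j > 0" unfolding J_def by auto
      have "s j powr be * (\<Sum>k<n. x k * wt k j) = (s j powr be * (g (s j))^2) * Re (ip n (cv V j) (mv n \<rho> (cv V j)))"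
        using K8[OF j] by simp
      also have "s j powr be * (g (s j))^2 = 1" using pw2[OF sj] al unfolding be_def g_def by simp
      finally show "s j powr be * (\<Sum>k<n. x k * wt k j) = Re (ip n (cv V j) (mv n \<rho> (cv V j)))" by simp
    qed
    thus ?thesis by simp
  qed
  also have "\<dots> \<le> lam powr q * (\<Sum>j<n. Re (ip n (cv V j) (mv n \<rho> (cv V j))))"
    using qr0 by (intro mult_left_mono sum_mono2) (auto simp: J_def)
  also have "(\<Sum>j<n. Re (ip n (cv V j) (mv n \<rho> (cv V j)))) = Re (mat_trace \<rho>)"
    using trace_basis[OF v rc] by (simp flip: Re_sum)
  finally have ub: "Re (mat_trace P) \<le> lam powr (\<alpha> - 1) * Re (mat_trace \<rho>)" unfolding q_def .
  have "0 \<le> Re (mat_trace P)" unfolding trP by (intro sum_nonneg) simp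
  thus ?thesis using ub unfolding P_def X_def by simp
qed

lemma sum_blocks: fixes nB nE :: nat and f :: "nat \<Rightarrow> 'a::comm_monoid_add"
  shows "(\<Sum>I<nB*nE. f I) = (\<Sum>b<nB. \<Sum>i<nE. f (b*nE+i))"
proof -
  have "(\<Sum>I<nB*nE. f I) = (\<Sum>b<nB. sum f {b*nE..<b*nE+nE})" using sum.nat_group[of f nE nB] by simp
  also have "\<dots> = (\<Sum>b<nB. \<Sum>i<nE. f (b*nE+i))"
  proof (rule sum.cong[OF refl])
    fix b assume "b \<in> {..<nB}"
    have "sum f {0 + b*nE..<nE + b*nE} = sum (\<lambda>i. f (i + b*nE)) {0..<nE}" by (rule sum.shift_bounds_nat_ivl)
    thus "sum f {b*nE..<b*nE+nE} = (\<Sum>i<nE. f (b*nE+i))" by (simp add: atLeast0LessThan add.commute)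
  qed
  finally show ?thesis .
qed

lemma blk_lt: "b < nB \<Longrightarrow> i < nE \<Longrightarrow> b*nE+i < nB*(nE::nat)"
proof -
  assume "b < nB" "i < nE"
  hence "b*nE+i < b*nE+nE" by simp
  also have "\<dots> = Suc b * nE" by simp
  also have "\<dots> \<le> nB*nE" using \<open>b < nB\<close> by (intro mult_le_mono1) simp
  finally show ?thesis .
qed

lemma blk_div: "i < (nE::nat) \<Longrightarrow> (b*nE+i) div nE = b"
  by simp

lemma blk_mod: "i < (nE::nat) \<Longrightarrow> (b*nE+i) mod nE = i"
  by simp

lemma block_qf:
  assumes M: "\<And>I J. I < nB*nE \<Longrightarrow> J < nB*nE \<Longrightarrow> M$$(I,J) = (if I div nE = J div nE then F (I div nE) $$ (I mod nE, J mod nE) else 0)"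
  shows "ip (nB*nE) x (mv (nB*nE) M x) = (\<Sum>b<nB. ip nE (\<lambda>i. x (b*nE+i)) (mv nE (F b) (\<lambda>i. x (b*nE+i))))"
proof -
  have inner: "mv (nB*nE) M x (b*nE+i) = mv nE (F b) (\<lambda>i. x (b*nE+i)) i" if b: "b < nB" and i: "i < nE" for b i
  proof -
    have "mv (nB*nE) M x (b*nE+i) = (\<Sum>b'<nB. \<Sum>j<nE. M$$(b*nE+i, b'*nE+j) * x (b'*nE+j))"
      unfolding mv_def by (rule sum_blocks)
    also have "\<dots> = (\<Sum>b'<nB. \<Sum>j<nE. if b' = b then F b $$ (i, j) * x (b*nE+j) else 0)"
      using M blk_lt[OF b i] blk_lt i by (intro sum.cong refl) (auto simp: blk_div blk_mod)
    also have "\<dots> = (\<Sum>b'<nB. if b' = b then (\<Sum>j<nE. F b $$ (i, j) * x (b*nE+j)) else 0)"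
      by (intro sum.cong refl) auto
    also have "\<dots> = (\<Sum>j<nE. F b $$ (i, j) * x (b*nE+j))"
      using b by simp
    finally show ?thesis unfolding mv_def .
  qed
  have "ip (nB*nE) x (mv (nB*nE) M x) = (\<Sum>b<nB. \<Sum>i<nE. cnj (x (b*nE+i)) * mv (nB*nE) M x (b*nE+i))"
    unfolding ip_def by (rule sum_blocks)
  also have "\<dots> = (\<Sum>b<nB. ip nE (\<lambda>i. x (b*nE+i)) (mv nE (F b) (\<lambda>i. x (b*nE+i))))"
    unfolding ip_def using inner by (intro sum.cong refl) auto
  finally show ?thesis .
qed

lemma qf_lin:
  assumes "finite A" "\<And>i j. i < n \<Longrightarrow> j < n \<Longrightarrow> M$$(i,j) = (\<Sum>a\<in>A. c a * G a $$ (i,j))"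
  shows "ip n y (mv n M y) = (\<Sum>a\<in>A. c a * ip n y (mv n (G a) y))"
proof -
  have "ip n y (mv n M y) = (\<Sum>i<n. \<Sum>j<n. \<Sum>a\<in>A. c a * (cnj (y i) * G a $$ (i,j) * y j))"
    unfolding ip_def mv_def using assms(2) by (simp add: sum_distrib_left sum_distrib_right mult_ac)
  also have "\<dots> = (\<Sum>i<n. \<Sum>a\<in>A. \<Sum>j<n. c a * (cnj (y i) * G a $$ (i,j) * y j))"
    by (rule sum.cong[OF refl], rule sum.swap)
  also have "\<dots> = (\<Sum>a\<in>A. \<Sum>i<n. \<Sum>j<n. c a * (cnj (y i) * G a $$ (i,j) * y j))"
    by (rule sum.swap)
  also have "\<dots> = (\<Sum>a\<in>A. c a * ip n y (mv n (G a) y))"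
    unfolding ip_def mv_def by (simp add: sum_distrib_left sum_distrib_right mult_ac)
  finally show ?thesis .
qed

lemma concrete_facts:
  fixes nA nB nE :: nat
    and p :: "nat \<Rightarrow> real"
    and rhoBE :: "nat \<Rightarrow> complex mat"
    and rhoE :: "complex mat"
  assumes p_nonneg: "\<forall>a<nA. p a \<ge> 0"
    and states: "\<forall>a<nA. density_mat (nB * nE) (rhoBE a)"
    and B_classical: "\<forall>a<nA. \<exists>\<omega>. (\<forall>b<nB. \<omega> b \<in> carrier_mat nE nE) \<and> rhoBE a = cq_mat nB nE \<omega>"
    and rhoE_def: "rhoE = mat nE nE (\<lambda>ij. \<Sum>a<nA. complex_of_real (p a) * ptrace_B nB nE (rhoBE a) $$ ij)"
    and a: "a < nA" and pa: "p a > 0"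
  shows "psd_mat (nB*nE) (rhoBE a)"
    and "kron (1\<^sub>m nB) rhoE \<in> carrier_mat (nB*nE) (nB*nE)"
    and "mat_adjoint (kron (1\<^sub>m nB) rhoE) = kron (1\<^sub>m nB) rhoE"
    and "\<And>x. Re (ip (nB*nE) x (mv (nB*nE) (rhoBE a) x)) \<le> (1 / p a) * Re (ip (nB*nE) x (mv (nB*nE) (kron (1\<^sub>m nB) rhoE) x))"
    and "Re (mat_trace (rhoBE a)) = 1"
proof -
  define Om where "Om a' = (SOME \<omega>. (\<forall>b<nB. \<omega> b \<in> carrier_mat nE nE) \<and> rhoBE a' = cq_mat nB nE \<omega>)" for a'
  have Om: "rhoBE a' = cq_mat nB nE (Om a')" if "a' < nA" for a'
  proof -
    have "\<exists>\<omega>. (\<forall>b<nB. \<omega> b \<in> carrier_mat nE nE) \<and> rhoBE a' = cq_mat nB nE \<omega>" using B_classical that by blast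
    from someI_ex[OF this] show ?thesis unfolding Om_def by blast
  qed
  have rpsd: "psd_mat (nB*nE) (rhoBE a')" if "a' < nA" for a'
    using states that unfolding density_mat_def by auto
  have rc: "rhoBE a' \<in> carrier_mat (nB*nE) (nB*nE)" if "a' < nA" for a' using psd_carrier[OF rpsd[OF that]] .
  have rent: "rhoBE a' $$ (I,J) = (if I div nE = J div nE then Om a' (I div nE) $$ (I mod nE, J mod nE) else 0)"
    if "a' < nA" "I < nB*nE" "J < nB*nE" for a' I J
    using Om[OF that(1)] that by (simp add: cq_mat_def)
  have Omh: "cnj (Om a' b $$ (j,i)) = Om a' b $$ (i,j)" if a': "a' < nA" and b: "b < nB" and i: "i < nE" and j: "j < nE" for a' b i j
  proof -
    have "Om a' b $$ (i,j) = rhoBE a' $$ (b*nE+i, b*nE+j)"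
      using rent[OF a' blk_lt[OF b i] blk_lt[OF b j]] i j by (simp add: blk_div blk_mod)
    also have "\<dots> = mat_adjoint (rhoBE a') $$ (b*nE+i, b*nE+j)" using psd_herm[OF rpsd[OF a']] by simp
    also have "\<dots> = cnj (rhoBE a' $$ (b*nE+j, b*nE+i))" using rc[OF a'] blk_lt[OF b i] blk_lt[OF b j] by simp
    also have "rhoBE a' $$ (b*nE+j, b*nE+i) = Om a' b $$ (j,i)"
      using rent[OF a' blk_lt[OF b j] blk_lt[OF b i]] i j by (simp add: blk_div blk_mod)
    finally show ?thesis by simp
  qed
  have ptr: "ptrace_B nB nE (rhoBE a') $$ (i,j) = (\<Sum>b<nB. Om a' b $$ (i,j))" if a': "a' < nA" and i: "i < nE" and j: "j < nE" for a' i j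
  proof -
    have "ptrace_B nB nE (rhoBE a') $$ (i,j) = (\<Sum>b<nB. rhoBE a' $$ (b*nE+i, b*nE+j))"
      using i j by (simp add: ptrace_B_def)
    also have "\<dots> = (\<Sum>b<nB. Om a' b $$ (i,j))"
      using rent[OF a' blk_lt blk_lt] i j by (intro sum.cong refl) (simp add: blk_div blk_mod)
    finally show ?thesis .
  qed
  have Ec: "rhoE \<in> carrier_mat nE nE" unfolding rhoE_def by simp
  have Eent: "rhoE $$ (i,j) = (\<Sum>a'<nA. complex_of_real (p a') * ptrace_B nB nE (rhoBE a') $$ (i,j))"
    if "i < nE" "j < nE" for i j
    using that unfolding rhoE_def by simp
  have Eh: "cnj (rhoE $$ (j,i)) = rhoE $$ (i,j)" if i: "i < nE" and j: "j < nE" for i j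
    using Eent[OF i j] Eent[OF j i] ptr i j Omh by simp
  define sg where "sg = kron (1\<^sub>m nB) rhoE"
  have sgc: "sg \<in> carrier_mat (nB*nE) (nB*nE)" unfolding sg_def kron_def using Ec by simp
  have sent: "sg $$ (I,J) = (if I div nE = J div nE then rhoE $$ (I mod nE, J mod nE) else 0)"
    if I: "I < nB*nE" and J: "J < nB*nE" for I J
  proof -
    have "I div nE < nB" "J div nE < nB" using I J by (simp_all add: less_mult_imp_div_less)
    thus ?thesis unfolding sg_def kron_def using Ec I J by simp
  qed
  have sgh: "mat_adjoint sg = sg"
  proof (rule eq_matI)
    fix I J assume "I < dim_row sg" "J < dim_col sg"
    hence I: "I < nB*nE" and J: "J < nB*nE" using sgc by auto
    have nE: "nE > 0" using I by (cases nE) auto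
    have "mat_adjoint sg $$ (I,J) = cnj (sg $$ (J,I))" using sgc I J by simp
    also have "\<dots> = sg $$ (I,J)" using sent[OF I J] sent[OF J I] Eh nE by simp
    finally show "mat_adjoint sg $$ (I,J) = sg $$ (I,J)" .
  qed (use sgc in auto)
  have qfr: "ip (nB*nE) x (mv (nB*nE) (rhoBE a') x) = (\<Sum>b<nB. ip nE (\<lambda>i. x (b*nE+i)) (mv nE (Om a' b) (\<lambda>i. x (b*nE+i))))"
    if "a' < nA" for a' x
    by (rule block_qf) (use rent[OF that] in simp)
  have qfs: "ip (nB*nE) x (mv (nB*nE) sg x) = (\<Sum>b<nB. ip nE (\<lambda>i. x (b*nE+i)) (mv nE rhoE (\<lambda>i. x (b*nE+i))))" for x
    by (rule block_qf[where F = "\<lambda>_. rhoE"]) (use sent in simp)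
  have Ompsd: "0 \<le> Re (ip nE y (mv nE (Om a' b) y))" if a': "a' < nA" and b: "b < nB" for a' b y
  proof -
    define x where "x I = (if I div nE = b then y (I mod nE) else 0)" for I
    have "ip (nB*nE) x (mv (nB*nE) (rhoBE a') x) = (\<Sum>b'<nB. if b' = b then ip nE y (mv nE (Om a' b) y) else 0)"
      unfolding qfr[OF a']
    proof (intro sum.cong refl)
      fix b' assume "b' \<in> {..<nB}"
      show "ip nE (\<lambda>i. x (b'*nE+i)) (mv nE (Om a' b') (\<lambda>i. x (b'*nE+i))) = (if b' = b then ip nE y (mv nE (Om a' b) y) else 0)"
      proof (cases "b' = b")
        case True
        have "(\<lambda>i. x (b'*nE+i)) = (\<lambda>i. x (b'*nE+i))" ..
        have e: "x (b*nE+i) = y i" if "i < nE" for i using that by (simp add: x_def blk_div blk_mod)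
        have "mv nE (Om a' b) (\<lambda>i. x (b*nE+i)) = mv nE (Om a' b) y" using e by (intro mv_cong) auto
        thus ?thesis using True e by (simp, intro ip_cong) auto
      next
        case False
        have "ip nE (\<lambda>i. x (b'*nE+i)) (mv nE (Om a' b') (\<lambda>i. x (b'*nE+i))) = ip nE (\<lambda>_. 0) (mv nE (Om a' b') (\<lambda>i. x (b'*nE+i)))"
          using False by (intro ip_cong) (auto simp: x_def blk_div)
        thus ?thesis using False by (simp add: ip_def)
      qed
    qed
    also have "\<dots> = ip nE y (mv nE (Om a' b) y)" using b by simp
    finally show ?thesis using psd_qf[OF rpsd[OF a'], of x] by simp
  qed
  have qfE: "Re (ip nE y (mv nE rhoE y)) = (\<Sum>a'<nA. p a' * (\<Sum>b<nB. Re (ip nE y (mv nE (Om a' b) y))))" for y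
  proof -
    have "ip nE y (mv nE rhoE y) = (\<Sum>a'<nA. complex_of_real (p a') * ip nE y (mv nE (ptrace_B nB nE (rhoBE a')) y))"
      by (rule qf_lin) (use Eent in auto)
    also have "\<dots> = (\<Sum>a'<nA. complex_of_real (p a') * (\<Sum>b<nB. 1 * ip nE y (mv nE (Om a' b) y)))"
    proof (intro sum.cong refl)
      fix a' assume "a' \<in> {..<nA}"
      hence a': "a' < nA" by simp
      have "ip nE y (mv nE (ptrace_B nB nE (rhoBE a')) y) = (\<Sum>b<nB. 1 * ip nE y (mv nE (Om a' b) y))"
        by (rule qf_lin) (use ptr[OF a'] in auto)
      thus "complex_of_real (p a') * ip nE y (mv nE (ptrace_B nB nE (rhoBE a')) y) = complex_of_real (p a') * (\<Sum>b<nB. 1 * ip nE y (mv nE (Om a' b) y))"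
        by simp
    qed
    finally show ?thesis by (simp add: Re_sum)
  qed
  have domb: "Re (ip nE y (mv nE (Om a b) y)) \<le> (1 / p a) * Re (ip nE y (mv nE rhoE y))" if b: "b < nB" for b y
  proof -
    have "p a * Re (ip nE y (mv nE (Om a b) y)) \<le> p a * (\<Sum>b'<nB. Re (ip nE y (mv nE (Om a b') y)))"
      using b Ompsd[OF a] pa by (intro mult_left_mono member_le_sum) auto
    also have "\<dots> \<le> (\<Sum>a'<nA. p a' * (\<Sum>b<nB. Re (ip nE y (mv nE (Om a' b) y))))"
      using a p_nonneg Ompsd
      by (intro member_le_sum[where i=a and A="{..<nA}" and f="\<lambda>a'. p a' * (\<Sum>b<nB. Re (ip nE y (mv nE (Om a' b) y)))", simplified])
         (auto intro!: mult_nonneg_nonneg sum_nonneg)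
    also have "\<dots> = Re (ip nE y (mv nE rhoE y))" using qfE by simp
    finally have "p a * Re (ip nE y (mv nE (Om a b) y)) \<le> Re (ip nE y (mv nE rhoE y))" .
    thus ?thesis using pa by (simp add: field_simps)
  qed
  show "psd_mat (nB*nE) (rhoBE a)" using rpsd[OF a] .
  show "kron (1\<^sub>m nB) rhoE \<in> carrier_mat (nB*nE) (nB*nE)" using sgc sg_def by simp
  show "mat_adjoint (kron (1\<^sub>m nB) rhoE) = kron (1\<^sub>m nB) rhoE" using sgh sg_def by simp
  show "Re (ip (nB*nE) x (mv (nB*nE) (rhoBE a) x)) \<le> (1 / p a) * Re (ip (nB*nE) x (mv (nB*nE) (kron (1\<^sub>m nB) rhoE) x))" for x
  proof -
    have "Re (ip (nB*nE) x (mv (nB*nE) (rhoBE a) x)) = (\<Sum>b<nB. Re (ip nE (\<lambda>i. x (b*nE+i)) (mv nE (Om a b) (\<lambda>i. x (b*nE+i)))))"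
      unfolding qfr[OF a] by (simp add: Re_sum)
    also have "\<dots> \<le> (\<Sum>b<nB. (1 / p a) * Re (ip nE (\<lambda>i. x (b*nE+i)) (mv nE rhoE (\<lambda>i. x (b*nE+i)))))"
      using domb by (intro sum_mono) auto
    also have "\<dots> = (1 / p a) * Re (ip (nB*nE) x (mv (nB*nE) sg x))"
      unfolding qfs by (simp add: Re_sum sum_distrib_left)
    finally show ?thesis unfolding sg_def .
  qed
  show "Re (mat_trace (rhoBE a)) = 1" using states a unfolding density_mat_def by simp
qed

lemma loewner_dom:
  assumes sc: "\<sigma> \<in> carrier_mat n n" and sh: "mat_adjoint \<sigma> = \<sigma>" and rpsd: "psd_mat n \<rho>"
    and dom: "\<And>x. Re (ip n x (mv n \<rho> x)) \<le> lam * Re (ip n x (mv n \<sigma> x))"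
  shows "loewner_le n \<rho> (complex_of_real lam \<cdot>\<^sub>m \<sigma>)"
proof -
  have rc: "\<rho> \<in> carrier_mat n n" using psd_carrier[OF rpsd] .
  have rh: "mat_adjoint \<rho> = \<rho>" using psd_herm[OF rpsd] .
  define M where "M = complex_of_real lam \<cdot>\<^sub>m \<sigma> - \<rho>"
  have Mc: "M \<in> carrier_mat n n" unfolding M_def using sc rc by auto
  have ent: "M $$ (i,j) = complex_of_real lam * \<sigma> $$ (i,j) - \<rho> $$ (i,j)" if "i < n" "j < n" for i j
    unfolding M_def using sc rc that by simp
  have hs: "cnj (\<sigma> $$ (j,i)) = \<sigma> $$ (i,j)" if "i < n" "j < n" for i j
    using arg_cong[OF sh, of "\<lambda>A. A $$ (i,j)"] sc that by simp
  have hr: "cnj (\<rho> $$ (j,i)) = \<rho> $$ (i,j)" if "i < n" "j < n" for i j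
    using arg_cong[OF rh, of "\<lambda>A. A $$ (i,j)"] rc that by simp
  have Mh: "mat_adjoint M = M"
  proof (rule eq_matI)
    fix i j assume "i < dim_row M" "j < dim_col M"
    hence i: "i < n" and j: "j < n" using Mc by auto
    show "mat_adjoint M $$ (i,j) = M $$ (i,j)"
      using Mc i j ent[OF i j] ent[OF j i] hs[OF i j] hr[OF i j] by simp
  qed (use Mc in auto)
  have mvM: "mv n M x i = complex_of_real lam * mv n \<sigma> x i - mv n \<rho> x i" if "i < n" for x i
    unfolding mv_def using ent[OF that]
    by (simp add: left_diff_distrib sum_subtractf sum_distrib_left mult.assoc)
  have qM: "Re (ip n x (mv n M x)) = lam * Re (ip n x (mv n \<sigma> x)) - Re (ip n x (mv n \<rho> x))" for x
  proof -
    have "ip n x (mv n M x) = ip n x (\<lambda>i. complex_of_real lam * mv n \<sigma> x i - mv n \<rho> x i)"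
      using mvM by (intro ip_cong) auto
    also have "\<dots> = complex_of_real lam * ip n x (mv n \<sigma> x) - ip n x (mv n \<rho> x)"
      unfolding ip_def by (simp add: right_diff_distrib sum_subtractf sum_distrib_left mult_ac)
    finally show ?thesis by simp
  qed
  have "psd_mat n M" using psd_iff[OF Mc] Mc Mh qM dom unfolding hermitian_mat_def by auto
  thus ?thesis unfolding loewner_le_def M_def using rc sc by auto
qed

theorem claimC14:
  fixes nA nB nE :: nat
    and p :: "nat \<Rightarrow> real"
    and rhoBE :: "nat \<Rightarrow> complex mat"
    and rhoE :: "complex mat"
  assumes p_nonneg: "\<forall>a<nA. p a \<ge> 0"
    and p_sum: "(\<Sum>a<nA. p a) = 1"
    and states: "\<forall>a<nA. density_mat (nB * nE) (rhoBE a)"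
    and B_classical: "\<forall>a<nA. \<exists>\<omega>. (\<forall>b<nB. \<omega> b \<in> carrier_mat nE nE) \<and> rhoBE a = cq_mat nB nE \<omega>"
    and rhoE_def: "rhoE = mat nE nE (\<lambda>ij. \<Sum>a<nA. complex_of_real (p a) * ptrace_B nB nE (rhoBE a) $$ ij)"
  shows "\<forall>a<nA. p a > 0 \<longrightarrow>
           (\<forall>\<alpha>::real. \<alpha> \<ge> 1 \<longrightarrow>
              renyi_D (nB * nE) \<alpha> (rhoBE a) (kron (1\<^sub>m nB) rhoE) \<noteq> \<infinity> \<and>
              2 powr ((\<alpha> - 1) * real_of_ereal (renyi_D (nB * nE) \<alpha> (rhoBE a) (kron (1\<^sub>m nB) rhoE)))
                \<le> p a powr (1 - \<alpha>))
           \<and> max_D (nB * nE) (rhoBE a) (kron (1\<^sub>m nB) rhoE) \<le> ereal (- log 2 (p a))"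
proof (intro allI impI)
  fix a assume a: "a < nA" and pa: "0 < p a"
  note cf = concrete_facts[OF p_nonneg states B_classical rhoE_def a pa]
  have lam: "1 / p a > 0" using pa by simp
  have rng: "mat_range (nB*nE) (rhoBE a) \<subseteq> mat_range (nB*nE) (kron (1\<^sub>m nB) rhoE)"
    by (rule range_incl[OF cf(1) cf(2) cf(3) cf(4) lam])
  have pa1: "p a \<le> 1"
  proof -
    have "p a \<le> (\<Sum>a'<nA. p a')" using a p_nonneg by (intro member_le_sum) auto
    thus ?thesis using p_sum by simp
  qed
  have part1: "\<forall>\<alpha>::real. \<alpha> \<ge> 1 \<longrightarrow>
              renyi_D (nB * nE) \<alpha> (rhoBE a) (kron (1\<^sub>m nB) rhoE) \<noteq> \<infinity> \<and>
              2 powr ((\<alpha> - 1) * real_of_ereal (renyi_D (nB * nE) \<alpha> (rhoBE a) (kron (1\<^sub>m nB) rhoE)))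
                \<le> p a powr (1 - \<alpha>)"
  proof (intro allI impI)
    fix \<alpha> :: real assume al: "\<alpha> \<ge> 1"
    show "renyi_D (nB * nE) \<alpha> (rhoBE a) (kron (1\<^sub>m nB) rhoE) \<noteq> \<infinity> \<and>
              2 powr ((\<alpha> - 1) * real_of_ereal (renyi_D (nB * nE) \<alpha> (rhoBE a) (kron (1\<^sub>m nB) rhoE)))
                \<le> p a powr (1 - \<alpha>)"
    proof (cases "\<alpha> = 1")
      case True
      have "renyi_D (nB * nE) \<alpha> (rhoBE a) (kron (1\<^sub>m nB) rhoE) = ereal (Re (mat_trace (rhoBE a * (mat_fun (nB*nE) (log 2) (rhoBE a) - mat_fun (nB*nE) (log 2) (kron (1\<^sub>m nB) rhoE)))))"
        using True rng by (simp add: renyi_D_def umegaki_D_def)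
      thus ?thesis using True pa by simp
    next
      case False
      hence al1: "\<alpha> > 1" using al by simp
      define S where "S = mat_fun (nB*nE) (\<lambda>x. x powr ((1 - \<alpha>) / (2 * \<alpha>))) (kron (1\<^sub>m nB) rhoE)"
      define T where "T = Re (mat_trace (mat_fun (nB*nE) (\<lambda>x. x powr \<alpha>) (S * rhoBE a * S)))"
      have sb: "0 \<le> T \<and> T \<le> (1 / p a) powr (\<alpha> - 1) * Re (mat_trace (rhoBE a))"
        unfolding T_def S_def by (rule sandwich_bound[OF cf(1) cf(2) cf(3) cf(4) lam al1])
      have R: "renyi_D (nB*nE) \<alpha> (rhoBE a) (kron (1\<^sub>m nB) rhoE) = ereal (1 / (\<alpha> - 1) * log 2 T)"
        using False rng cf(5) unfolding renyi_D_def sandwiched_D_def T_def S_def Let_def by simp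
      have eqp: "(1 / p a) powr (\<alpha> - 1) = p a powr (1 - \<alpha>)"
      proof -
        have "(1 / p a) powr (\<alpha> - 1) = 1 / p a powr (\<alpha> - 1)" using pa by (simp add: powr_divide)
        also have "\<dots> = p a powr (- (\<alpha> - 1))" by (simp only: powr_minus_divide)
        also have "- (\<alpha> - 1) = 1 - \<alpha>" by simp
        finally show ?thesis .
      qed
      have Tle: "T \<le> p a powr (1 - \<alpha>)" using sb cf(5) eqp by simp
      have one: "1 \<le> p a powr (1 - \<alpha>)"
      proof -
        have "1 \<le> 1 / p a" using pa pa1 by simp
        hence "1 \<le> (1 / p a) powr (\<alpha> - 1)" using al1 by (intro ge_one_powr_ge_zero) auto
        thus ?thesis using eqp by simp
      qed
      have "2 powr ((\<alpha> - 1) * real_of_ereal (renyi_D (nB*nE) \<alpha> (rhoBE a) (kron (1\<^sub>m nB) rhoE))) = 2 powr (log 2 T)"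
        using R al1 by simp
      also have "\<dots> \<le> p a powr (1 - \<alpha>)"
      proof (cases "T = 0")
        case True thus ?thesis using one by (simp add: log_def)
      next
        case False hence "T > 0" using sb by simp
        thus ?thesis using Tle by simp
      qed
      finally show ?thesis using R by simp
    qed
  qed
  have part2: "max_D (nB * nE) (rhoBE a) (kron (1\<^sub>m nB) rhoE) \<le> ereal (- log 2 (p a))"
  proof -
    have "2 powr (- log 2 (p a)) = 1 / p a" using pa by (simp add: powr_minus_divide)
    hence "loewner_le (nB*nE) (rhoBE a) (complex_of_real (2 powr (- log 2 (p a))) \<cdot>\<^sub>m kron (1\<^sub>m nB) rhoE)"
      using loewner_dom[OF cf(2) cf(3) cf(1) cf(4)] by simp
    hence "ereal (- log 2 (p a)) \<in> {ereal t | t. loewner_le (nB*nE) (rhoBE a) (complex_of_real (2 powr t) \<cdot>\<^sub>m kron (1\<^sub>m nB) rhoE)}"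
      by blast
    thus ?thesis unfolding max_D_def by (rule Inf_lower)
  qed
  show "(\<forall>\<alpha>::real. \<alpha> \<ge> 1 \<longrightarrow>
              renyi_D (nB * nE) \<alpha> (rhoBE a) (kron (1\<^sub>m nB) rhoE) \<noteq> \<infinity> \<and>
              2 powr ((\<alpha> - 1) * real_of_ereal (renyi_D (nB * nE) \<alpha> (rhoBE a) (kron (1\<^sub>m nB) rhoE)))
                \<le> p a powr (1 - \<alpha>))
           \<and> max_D (nB * nE) (rhoBE a) (kron (1\<^sub>m nB) rhoE) \<le> ereal (- log 2 (p a))"
    using part1 part2 by blast
qed


end
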